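(* Let $f:[0,\infty)\to[0,\infty)$ be non-increasing with $f(0)=1$ and $f\in C^4([0,\infty))$, let $\mathcal L(\gamma)=\int_0^\infty e^{-\gamma x}f(x)dx$ and $\gamma_{\min}=\inf\{\gamma\in\mathbb R:\mathcal L(\gamma)<\infty\}$, and assume that for every $\gamma>\gamma_{\min}$ and $j=0,1,2,3,4$, $e^{-\gamma x}f^{(j)}(x)\in L^1([0,\infty))$ and $e^{-\gamma x}f^{(j)}(x)\to0$ as $x\to\infty$. For $s\ge1$ and $\rho=1-\gamma/\sqrt s$ define $F_s(\rho)=\sum_{n=0}^\infty f\bigl(\tfrac{n+1}{\sqrt s}\bigr)\rho^{n+1}$. Then for $\gamma_{\min}<\gamma\le\sqrt s$, $F_s(\rho)=\sqrt s\,\mathcal L(\gamma)+\mathcal M(\gamma)+O(1/\sqrt s)$, with $\mathcal M(\gamma)=\tfrac12\gamma^2\mathcal L'(\gamma)-\tfrac12$, where the $O(1/\sqrt s)$ holds uniformly in $\gamma$ in any compact subset of $(\gamma_{\min},\infty)$. Moreover, to leading order this $O(1/\sqrt s)$ term equals $\mathcal N(\gamma)/\sqrt s$, where $\mathcal N(\gamma)=\tfrac13\gamma^3\mathcal L'(\gamma)+\tfrac18\gamma^4\mathcal L''(\gamma)+\tfrac1{12}(\gamma-f'(0))$.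
   Context: $F_s(\rho)$ is the quantity $\sum_{n\ge0}p_s(0)\cdots p_s(n)\rho^{n+1}$ for an $s$-server system with admission control under the global control $p_s(0)\cdots p_s(n)=f((n+1)/\sqrt s)$. *)

theory Defs
  imports "HOL-Analysis.Analysis"
begin

text \<open>Laplace transform of f on [0,oo) as an extended nonnegative integral
  (used to decide finiteness) and as a real-valued (Lebesgue) integral.\<close>

definition Lap_nn :: "(real \<Rightarrow> real) \<Rightarrow> real \<Rightarrow> ennreal" where
  "Lap_nn f \<gamma> = (\<integral>\<^sup>+ x. ennreal (exp (- \<gamma> * x) * f x) * indicator {0..} x \<partial>lborel)"

definition Lap :: "(real \<Rightarrow> real) \<Rightarrow> real \<Rightarrow> real" where
  "Lap f \<gamma> = (LINT x:{0..}|lborel. exp (- \<gamma> * x) * f x)"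

definition gamma_min :: "(real \<Rightarrow> real) \<Rightarrow> ereal" where
  "gamma_min f = Inf {ereal \<gamma> | \<gamma>. Lap_nn f \<gamma> < \<infinity>}"

definition Fs :: "(real \<Rightarrow> real) \<Rightarrow> real \<Rightarrow> real \<Rightarrow> real" where
  "Fs f s \<rho> = (\<Sum>n. f (real (n + 1) / sqrt s) * \<rho> ^ (n + 1))"

definition Mcal :: "(real \<Rightarrow> real) \<Rightarrow> real \<Rightarrow> real" where
  "Mcal f \<gamma> = 1/2 * \<gamma>^2 * deriv (Lap f) \<gamma> - 1/2"

definition Ncal :: "(real \<Rightarrow> real) \<Rightarrow> real \<Rightarrow> real \<Rightarrow> real" where
  "Ncal f f'0 \<gamma> = 1/3 * \<gamma>^3 * deriv (Lap f) \<gamma> + 1/8 * \<gamma>^4 * deriv (deriv (Lap f)) \<gamma>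
      + 1/12 * (\<gamma> - f'0)"

end

theory Submission
  imports Defs
begin

lemma pow_le_fact_exp:
  fixes y :: real assumes "0 \<le> y" shows "y ^ k \<le> fact k * exp y"
proof -
  obtain t where t: "exp y = (\<Sum>m<Suc k. y ^ m / fact m) + exp t / fact (Suc k) * y ^ Suc k"
    using Maclaurin_exp_le[of y "Suc k"] by blast
  have "y ^ k / fact k \<le> (\<Sum>m<Suc k. y ^ m / fact m)"
    by (rule member_le_sum[where f="\<lambda>m. y ^ m / fact m" and i=k]) (use assms in auto)
  also have "\<dots> \<le> exp y" unfolding t using assms by (intro add_increasing2) auto
  finally show ?thesis by (simp add: divide_simps mult.commute)
qed

lemma pow_exp_bound:
  fixes x \<epsilon> :: real assumes "0 \<le> x" "0 < \<epsilon>"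
  shows "x ^ k * exp (- \<epsilon> * x) \<le> fact k / \<epsilon> ^ k"
proof -
  have "(\<epsilon> * x) ^ k \<le> fact k * exp (\<epsilon> * x)" using pow_le_fact_exp assms by simp
  hence "\<epsilon>^k * x ^ k * exp (- \<epsilon> * x) \<le> fact k * exp (\<epsilon> * x) * exp (- \<epsilon> * x)"
    by (simp add: power_mult_distrib mult_right_mono)
  also have "\<dots> = fact k" by (simp add: exp_minus field_simps)
  finally show ?thesis using assms by (simp add: field_simps)
qed

lemma exp_rem2:
  fixes y :: real shows "\<bar>exp (- y) - 1 + y\<bar> \<le> y^2 / 2 * exp \<bar>y\<bar>"
proof -
  obtain t where t: "\<bar>t\<bar> \<le> \<bar>-y\<bar>" "exp (-y) = (\<Sum>m<2. (-y) ^ m / fact m) + exp t / fact 2 * (-y) ^ 2"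
    using Maclaurin_exp_le[of "-y" 2] by blast
  have e: "exp (- y) - 1 + y = exp t / 2 * y^2" using t(2) by (simp add: numeral_2_eq_2)
  have "exp t \<le> exp \<bar>y\<bar>" using t(1) by simp
  from mult_right_mono[OF this, of "y^2"] show ?thesis unfolding e by (simp add: abs_mult mult.commute)
qed

lemma exp_rem3:
  fixes y :: real assumes "0 \<le> y" shows "\<bar>exp (- y) - 1 + y - y^2/2\<bar> \<le> y^3 / 6"
proof (cases "y = 0")
  case True thus ?thesis by simp
next
  case False
  hence yp: "- y < 0" using assms by simp
  obtain t where t: "-y < t" "t < 0" "exp (-y) = (\<Sum>m<3. exp 0 / fact m * (-y) ^ m) + exp t / fact 3 * (-y) ^ 3"
    using Maclaurin_minus[of "-y" 3 "\<lambda>n. exp" exp, OF yp] by auto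
  have e: "exp (- y) - 1 + y - y^2/2 = - exp t / 6 * y^3"
    using t(3) by (simp add: numeral_3_eq_3 fact_numeral power2_eq_square power3_eq_cube)
  have "exp t \<le> 1" using t(2) by simp
  from mult_right_mono[OF this, of "y^3"] show ?thesis unfolding e using assms by (simp add: abs_mult)
qed

lemma ln_rem:
  fixes u :: real assumes "\<bar>u\<bar> \<le> 1/2"
  shows "\<bar>- ln (1 - u) - u - u^2/2 - u^3/3\<bar> \<le> 2 * u^4"
proof -
  define \<phi> where "\<phi> v = - ln (1 - v) - v - v^2/2 - v^3/3" for v :: real
  have d: "(\<phi> has_real_derivative v^3 / (1 - v)) (at v)" if "\<bar>v\<bar> \<le> 1/2" for v
  proof -
    have "(\<phi> has_real_derivative (- (-1 / (1 - v)) - 1 - v - v^2)) (at v)"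
      unfolding \<phi>_def using that
      by (auto intro!: derivative_eq_intros simp: power2_eq_square power3_eq_cube)
    moreover have "- (-1 / (1 - v)) - 1 - v - v^2 = v^3 / (1 - v)" using that
      by (simp add: field_simps power2_eq_square power3_eq_cube)
    ultimately show ?thesis by simp
  qed
  have bd: "\<bar>v^3 / (1 - v)\<bar> \<le> 2 * \<bar>u\<bar>^3" if "\<bar>v\<bar> \<le> \<bar>u\<bar>" for v
  proof -
    have c1: "\<bar>v\<bar>^3 \<le> \<bar>u\<bar>^3" using that by (simp add: power_mono)
    have h: "1/2 \<le> 1 - v" using that assms by simp
    have c2: "\<bar>u\<bar>^3 \<le> 2*\<bar>u\<bar>^3*(1-v)"
      using mult_left_mono[of 1 "2*(1-v)" "\<bar>u\<bar>^3"] h by (simp add: algebra_simps)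
    have "\<bar>v^3/(1-v)\<bar> = \<bar>v\<bar>^3/(1-v)" using h by (simp add: abs_div power_abs)
    also have "\<dots> \<le> 2 * \<bar>u\<bar>^3" using h by (subst pos_divide_le_eq) (use c1 c2 in linarith)+
    finally show ?thesis .
  qed
  have \<phi>0: "\<phi> 0 = 0" by (simp add: \<phi>_def)
  have "\<bar>\<phi> u\<bar> \<le> 2 * \<bar>u\<bar>^3 * \<bar>u\<bar>"
  proof (cases "u = 0")
    case True thus ?thesis by (simp add: \<phi>0)
  next
    case False
    show ?thesis
    proof (cases "u > 0")
      case True
      obtain z where z: "0 < z" "z < u" "\<phi> u - \<phi> 0 = (u - 0) * (z^3/(1-z))"
        using MVT2[of 0 u \<phi> "\<lambda>v. v^3/(1-v)"] True d assms by force
      have "\<bar>z^3/(1-z)\<bar> \<le> 2 * \<bar>u\<bar>^3" by (rule bd) (use z True in auto)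
      have "\<bar>\<phi> u\<bar> = \<bar>u\<bar> * \<bar>z^3/(1-z)\<bar>" using z \<phi>0 by (simp add: abs_mult)
      also have "\<dots> \<le> \<bar>u\<bar> * (2*\<bar>u\<bar>^3)" by (rule mult_left_mono[OF \<open>\<bar>z^3/(1-z)\<bar> \<le> 2 * \<bar>u\<bar>^3\<close>]) simp
      finally show ?thesis by (simp add: algebra_simps)
    next
      case False2: False
      hence un: "u < 0" using False by simp
      obtain z where z: "u < z" "z < 0" "\<phi> 0 - \<phi> u = (0 - u) * (z^3/(1-z))"
        using MVT2[of u 0 \<phi> "\<lambda>v. v^3/(1-v)"] un d assms by force
      have "\<bar>z^3/(1-z)\<bar> \<le> 2 * \<bar>u\<bar>^3" by (rule bd) (use z un in auto)
      have "\<bar>\<phi> u\<bar> = \<bar>u\<bar> * \<bar>z^3/(1-z)\<bar>" using z \<phi>0 by (simp add: abs_mult)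
      also have "\<dots> \<le> \<bar>u\<bar> * (2*\<bar>u\<bar>^3)" by (rule mult_left_mono[OF \<open>\<bar>z^3/(1-z)\<bar> \<le> 2 * \<bar>u\<bar>^3\<close>]) simp
      finally show ?thesis by (simp add: algebra_simps)
    qed
  qed
  moreover have "2 * \<bar>u\<bar>^3 * \<bar>u\<bar> = 2 * u^4" by (cases "u \<ge> 0") (auto simp: eval_nat_numeral algebra_simps)
  ultimately show ?thesis by (simp add: \<phi>_def)
qed


locale S4 =
  fixes f :: "real \<Rightarrow> real" and fd :: "nat \<Rightarrow> real \<Rightarrow> real"
  assumes nonneg: "\<And>x. x \<ge> 0 \<Longrightarrow> f x \<ge> 0"
    and noninc: "\<And>x y. 0 \<le> x \<Longrightarrow> x \<le> y \<Longrightarrow> f y \<le> f x"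
    and f0: "f 0 = 1"
    and fd0: "fd 0 = f"
    and fd_deriv: "\<And>j x. j < 4 \<Longrightarrow> x \<ge> 0 \<Longrightarrow>
                     (fd j has_real_derivative fd (Suc j) x) (at x within {0..})"
    and fd4_cont: "continuous_on {0..} (fd 4)"
    and integrable: "\<And>\<gamma> j. ereal \<gamma> > gamma_min f \<Longrightarrow> j \<le> 4 \<Longrightarrow>
                     set_integrable lborel {0..} (\<lambda>x. exp (- \<gamma> * x) * fd j x)"
    and vanish: "\<And>\<gamma> j. ereal \<gamma> > gamma_min f \<Longrightarrow> j \<le> 4 \<Longrightarrow>
                     ((\<lambda>x. exp (- \<gamma> * x) * fd j x) \<longlongrightarrow> 0) at_top"
begin

definition G :: "real set" where "G = {c. ereal c > gamma_min f}"

lemma G_up: "c \<in> G \<Longrightarrow> c \<le> d \<Longrightarrow> d \<in> G"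
  unfolding G_def by (auto intro: order_less_le_trans)

lemma G_below: assumes "c \<in> G" obtains c' where "c' \<in> G" "c' < c"
proof -
  from assms have "gamma_min f < ereal c" by (simp add: G_def)
  then obtain z where "gamma_min f < ereal z" "ereal z < ereal c" using ereal_dense2 by blast
  thus ?thesis using that by (auto simp: G_def)
qed

lemma absint: assumes "c \<in> G" "j \<le> 4"
  shows "(\<lambda>x. exp (- c * x) * fd j x) absolutely_integrable_on {0..}"
proof -
  have si: "set_integrable lborel {0..} (\<lambda>x. exp (- c * x) * fd j x)"
    using integrable assms by (simp add: G_def)
  show ?thesis unfolding absolutely_integrable_on_def
    using set_borel_integral_eq_integral(1)[OF si] set_borel_integral_eq_integral(1)[OF set_integrable_norm[OF si]]
    by simp
qed

lemma Lap_eq: assumes "c \<in> G" shows "Lap f c = integral {0..} (\<lambda>x. exp (- c * x) * f x)"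
proof -
  have si: "set_integrable lborel {0..} (\<lambda>x. exp (- c * x) * fd 0 x)"
    using integrable assms by (simp add: G_def)
  show ?thesis unfolding Lap_def using set_borel_integral_eq_integral(2)[OF si] by (simp add: fd0)
qed

lemma absint_pow: assumes "c \<in> G" "j \<le> 4"
  shows "(\<lambda>x. x^k * exp (- c * x) * fd j x) absolutely_integrable_on {0..}"
proof -
  obtain c' where c': "c' \<in> G" "c' < c" using G_below assms(1) by blast
  define \<epsilon> where "\<epsilon> = c - c'"
  have ep: "0 < \<epsilon>" using c' by (simp add: \<epsilon>_def)
  have m: "(\<lambda>x. x^k * exp (- \<epsilon> * x)) \<in> borel_measurable (lebesgue_on {0..})"
    by (rule continuous_imp_measurable_on_sets_lebesgue) (auto intro!: continuous_intros)
  have b: "bounded ((\<lambda>x. x^k * exp (- \<epsilon> * x)) ` {0..})"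
    unfolding bounded_real using pow_exp_bound[OF _ ep, of _ k] by auto
  have "(\<lambda>x. (x^k * exp (- \<epsilon> * x)) * (exp (- c' * x) * fd j x)) absolutely_integrable_on {0..}"
    by (rule absolutely_integrable_bounded_measurable_product_real[OF m _ b absint[OF c'(1) assms(2)]]) auto
  moreover have "(\<lambda>x. (x^k * exp (- \<epsilon> * x)) * (exp (- c' * x) * fd j x)) = (\<lambda>x. x^k * exp (- c * x) * fd j x)"
  proof
    fix x
    have "exp (- \<epsilon> * x) * exp (- c' * x) = exp (- c * x)"
      by (simp only: mult_exp_exp) (simp add: \<epsilon>_def algebra_simps)
    thus "(x^k * exp (- \<epsilon> * x)) * (exp (- c' * x) * fd j x) = x^k * exp (- c * x) * fd j x"
      by (metis mult.assoc)
  qed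
  ultimately show ?thesis by simp
qed

definition J :: "nat \<Rightarrow> real \<Rightarrow> real" where
  "J k c = integral {0..} (\<lambda>x. x^k * exp (- c * x) * f x)"

lemma intw: "c \<in> G \<Longrightarrow> (\<lambda>x. x^k * exp (- c * x) * f x) integrable_on {0..}"
  using absint_pow[of c 0 k] by (simp add: fd0 absolutely_integrable_on_def)

lemma J_nonneg: "c \<in> G \<Longrightarrow> 0 \<le> J k c"
  unfolding J_def by (rule integral_nonneg[OF intw]) (auto intro!: mult_nonneg_nonneg nonneg)

lemma J_mono: assumes "c \<in> G" "c \<le> d" shows "J k d \<le> J k c"
  unfolding J_def
proof (rule integral_le[OF intw intw])
  show "d \<in> G" using G_up assms by blast
  show "c \<in> G" by fact
  fix x :: real assume "x \<in> {0..}"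
  hence x: "0 \<le> x" by simp
  have "exp (- d * x) \<le> exp (- c * x)" using assms(2) x by (simp add: mult_right_mono)
  thus "x ^ k * exp (- d * x) * f x \<le> x ^ k * exp (- c * x) * f x"
    using x nonneg[OF x] by (intro mult_right_mono mult_left_mono) auto
qed

lemma J0_Lap: "c \<in> G \<Longrightarrow> Lap f c = J 0 c"
  by (simp add: Lap_eq J_def)

end

context S4 begin

lemma exp_split: "exp(-(c+d)*x) = exp(-c*x) * exp(-(d*x::real))"
proof -
  have "-(c+d)*x = -c*x + -(d*x)" by (simp add: algebra_simps)
  thus ?thesis by (simp only: mult_exp_exp)
qed

lemma J_shift: assumes "c \<in> G" "c + d \<in> G"
  shows "J k (c+d) = integral {0..} (\<lambda>x. x^k*exp(-c*x)*f x * exp(-(d*x)))"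
proof -
  show ?thesis unfolding J_def exp_split by (simp add: ac_simps)
qed

lemma int_cmul: "(g::real\<Rightarrow>real) integrable_on S \<Longrightarrow> (\<lambda>x. c * g x) integrable_on S"
  by (metis has_integral_mult_right integrable_integral has_integral_integrable)

lemma int_lin4:
  fixes A B C D :: "real \<Rightarrow> real"
  assumes "A integrable_on S" "B integrable_on S" "C integrable_on S" "D integrable_on S"
  shows "integral S (\<lambda>x. A x - B x + d * C x - e * D x)
     = integral S A - integral S B + d * integral S C - e * integral S D"
  by (intro integral_unique has_integral_diff has_integral_add has_integral_mult_right
      integrable_integral assms)

lemma int_lin3:
  fixes A B C :: "real \<Rightarrow> real"
  assumes "A integrable_on S" "B integrable_on S" "C integrable_on S"
  shows "integral S (\<lambda>x. A x - B x + d * C x)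
     = integral S A - integral S B + d * integral S C"
  by (intro integral_unique has_integral_diff has_integral_add has_integral_mult_right
      integrable_integral assms)

lemma J_taylor2: assumes c: "c \<in> G" and cd: "c - \<bar>d\<bar> \<in> G"
  shows "\<bar>J k (c+d) - J k c + d * J (Suc k) c\<bar> \<le> d^2/2 * J (k+2) (c - \<bar>d\<bar>)"
proof -
  define w where "w k c x = x^k*exp(-c*x)*f x" for k c x
  have cd': "c + d \<in> G" using cd G_up by force
  have i1: "w k (c+d) integrable_on {0..}" and i2: "w k c integrable_on {0..}"
    and i3: "w (Suc k) c integrable_on {0..}" and i4: "w (k+2) (c - \<bar>d\<bar>) integrable_on {0..}"
    unfolding w_def using intw c cd cd' by blast+
  have Jw: "\<And>k c. J k c = integral {0..} (w k c)" unfolding J_def w_def by simp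
  have I: "J k (c+d) - J k c + d * J (Suc k) c
      = integral {0..} (\<lambda>x. (w k (c+d) x - w k c x) + d * w (Suc k) c x)"
    unfolding Jw by (rule int_lin3[OF i1 i2 i3, symmetric])
  have "norm (integral {0..} (\<lambda>x. (w k (c+d) x - w k c x) + d * w (Suc k) c x))
      \<le> integral {0..} (\<lambda>x. d^2/2 * w (k+2) (c - \<bar>d\<bar>) x)"
  proof (rule integral_norm_bound_integral)
    show "(\<lambda>x. (w k (c+d) x - w k c x) + d * w (Suc k) c x) integrable_on {0..}"
      using i1 i2 i3 by (auto intro!: integrable_diff integrable_add int_cmul)
    show "(\<lambda>x. d^2/2 * w (k+2) (c - \<bar>d\<bar>) x) integrable_on {0..}"
      using i4 by (auto intro!: int_cmul)
    fix x :: real assume "x \<in> {0..}"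
    hence x: "0 \<le> x" by simp
    have w0: "0 \<le> w k c x" unfolding w_def using x nonneg[OF x] by simp
    have pt: "(w k (c+d) x - w k c x) + d * w (Suc k) c x = w k c x * (exp (- (d*x)) - 1 + d*x)"
      unfolding w_def exp_split by (simp add: algebra_simps)
    have "\<bar>exp (- (d*x)) - 1 + d*x\<bar> \<le> (d*x)^2/2 * exp \<bar>d*x\<bar>" by (rule exp_rem2)
    hence "w k c x * \<bar>exp (- (d*x)) - 1 + d*x\<bar> \<le> w k c x * ((d*x)^2/2 * exp \<bar>d*x\<bar>)"
      using w0 by (rule mult_left_mono)
    also have "w k c x * ((d*x)^2/2 * exp \<bar>d*x\<bar>) = d^2/2 * w (k+2) (c - \<bar>d\<bar>) x"
      unfolding w_def using x
      by (simp add: abs_mult power_mult_distrib mult_exp_exp algebra_simps power2_eq_square)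
    finally show "norm ((w k (c+d) x - w k c x) + d * w (Suc k) c x) \<le> d^2/2 * w (k+2) (c - \<bar>d\<bar>) x"
      unfolding pt using w0 by (simp add: abs_mult)
  qed
  thus ?thesis unfolding I by (simp add: J_def w_def)
qed

lemma J_taylor3: assumes c: "c \<in> G" and d: "0 \<le> d"
  shows "\<bar>J 0 (c+d) - J 0 c + d * J 1 c - d^2/2 * J 2 c\<bar> \<le> d^3/6 * J 3 c"
proof -
  define w where "w k c x = x^k*exp(-c*x)*f x" for k :: nat and c x
  have cd': "c + d \<in> G" using c d G_up by force
  have i1: "w 0 (c+d) integrable_on {0..}" and i2: "w 0 c integrable_on {0..}"
    and i3: "w 1 c integrable_on {0..}" and i4: "w 2 c integrable_on {0..}"
    and i5: "w 3 c integrable_on {0..}"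
    unfolding w_def using intw c cd' by blast+
  have Jw: "\<And>k c. J k c = integral {0..} (w k c)" unfolding J_def w_def by simp
  have I: "J 0 (c+d) - J 0 c + d * J 1 c - d^2/2 * J 2 c
      = integral {0..} (\<lambda>x. ((w 0 (c+d) x - w 0 c x) + d * w 1 c x) - d^2/2 * w 2 c x)"
    unfolding Jw by (rule int_lin4[OF i1 i2 i3 i4, symmetric])
  have "norm (integral {0..} (\<lambda>x. ((w 0 (c+d) x - w 0 c x) + d * w 1 c x) - d^2/2 * w 2 c x))
      \<le> integral {0..} (\<lambda>x. d^3/6 * w 3 c x)"
  proof (rule integral_norm_bound_integral)
    show "(\<lambda>x. ((w 0 (c+d) x - w 0 c x) + d * w 1 c x) - d^2/2 * w 2 c x) integrable_on {0..}"
      using i1 i2 i3 i4 by (auto intro!: integrable_diff integrable_add int_cmul)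
    show "(\<lambda>x. d^3/6 * w 3 c x) integrable_on {0..}"
      using i5 by (auto intro!: int_cmul)
    fix x :: real assume "x \<in> {0..}"
    hence x: "0 \<le> x" by simp
    have w0: "0 \<le> w 0 c x" unfolding w_def using x nonneg[OF x] by simp
    have pt: "((w 0 (c+d) x - w 0 c x) + d * w 1 c x) - d^2/2 * w 2 c x
        = w 0 c x * (exp (- (d*x)) - 1 + d*x - (d*x)^2/2)"
      unfolding w_def exp_split by (simp add: algebra_simps power2_eq_square)
    have "\<bar>exp (- (d*x)) - 1 + d*x - (d*x)^2/2\<bar> \<le> (d*x)^3/6" by (rule exp_rem3) (use x d in simp)
    hence "w 0 c x * \<bar>exp (- (d*x)) - 1 + d*x - (d*x)^2/2\<bar> \<le> w 0 c x * ((d*x)^3/6)"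
      using w0 by (rule mult_left_mono)
    also have "w 0 c x * ((d*x)^3/6) = d^3/6 * w 3 c x"
      unfolding w_def by (simp add: power_mult_distrib algebra_simps)
    finally show "norm (((w 0 (c+d) x - w 0 c x) + d * w 1 c x) - d^2/2 * w 2 c x) \<le> d^3/6 * w 3 c x"
      unfolding pt using w0 by (simp add: abs_mult)
  qed
  thus ?thesis unfolding I by (simp add: J_def w_def)
qed

lemma J_deriv: assumes c: "c \<in> G" shows "(J k has_real_derivative - J (Suc k) c) (at c)"
proof -
  obtain c' where c': "c' \<in> G" "c' < c" using G_below c by blast
  define K where "K = J (k+2) c'"
  have pt: "norm ((J k (c+d) - J k c)/d - (- J (Suc k) c)) \<le> \<bar>d\<bar>/2 * K"
    if d: "d \<noteq> 0" "\<bar>d\<bar> < c - c'" for d :: real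
  proof -
    have cd: "c - \<bar>d\<bar> \<in> G" using G_up[OF c'(1)] d by simp
    have "norm ((J k (c+d) - J k c)/d - (- J (Suc k) c)) = \<bar>J k (c+d) - J k c + d * J (Suc k) c\<bar> / \<bar>d\<bar>"
      using d by (simp add: field_simps)
    also have "\<dots> \<le> (d^2/2 * J (k+2) (c - \<bar>d\<bar>)) / \<bar>d\<bar>"
      by (rule divide_right_mono[OF J_taylor2[OF c cd]]) simp
    also have "\<dots> = \<bar>d\<bar>/2 * J (k+2) (c - \<bar>d\<bar>)" using d by (simp add: power2_eq_square field_simps)
    also have "\<dots> \<le> \<bar>d\<bar>/2 * K" unfolding K_def
      by (rule mult_left_mono[OF J_mono[OF c'(1)]]) (use d in auto)
    finally show ?thesis .
  qed
  have ev: "\<forall>\<^sub>F d in at 0. norm ((J k (c+d) - J k c)/d - (- J (Suc k) c)) \<le> \<bar>d\<bar>/2 * K"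
    unfolding eventually_at using c' pt by (auto simp: dist_real_def intro!: exI[of _ "c-c'"])
  have "((\<lambda>d. \<bar>d\<bar>/2 * K) \<longlongrightarrow> \<bar>0\<bar>/2 * K) (at (0::real))"
    by (intro tendsto_intros) auto
  hence "((\<lambda>d. \<bar>d\<bar>/2 * K) \<longlongrightarrow> 0) (at (0::real))" by simp
  from Lim_null_comparison[OF ev this] show ?thesis
    unfolding DERIV_def by (subst Lim_null) simp
qed

lemma deriv_Lap: assumes c: "c \<in> G" shows "deriv (Lap f) c = - J 1 c"
proof -
  obtain c' where c': "c' \<in> G" "c' < c" using G_below c by blast
  have D: "(J 0 has_real_derivative - J 1 c) (at c)" using J_deriv[OF c, of 0] by simp
  have E: "J 0 x = Lap f x" if "x \<in> {c'<..}" for x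
  proof -
    have "x \<in> G" using G_up[OF c'(1)] that by simp
    thus ?thesis by (simp add: J0_Lap)
  qed
  have "(Lap f has_real_derivative - J 1 c) (at c)"
    by (rule has_field_derivative_transform_within_open[OF D open_greaterThan _ E]) (use c' in simp)
  thus ?thesis by (rule DERIV_imp_deriv)
qed

lemma deriv2_Lap: assumes c: "c \<in> G" shows "deriv (deriv (Lap f)) c = J 2 c"
proof -
  obtain c' where c': "c' \<in> G" "c' < c" using G_below c by blast
  have "((\<lambda>x. - J 1 x) has_real_derivative - (- J 2 c)) (at c)"
    using J_deriv[OF c, of 1] by (intro derivative_intros) (simp add: numeral_2_eq_2)
  hence D: "((\<lambda>x. - J 1 x) has_real_derivative J 2 c) (at c)" by simp
  have E: "- J 1 x = deriv (Lap f) x" if "x \<in> {c'<..}" for x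
  proof -
    have "x \<in> G" using G_up[OF c'(1)] that by simp
    thus ?thesis by (simp add: deriv_Lap)
  qed
  have "(deriv (Lap f) has_real_derivative J 2 c) (at c)"
    by (rule has_field_derivative_transform_within_open[OF D open_greaterThan _ E]) (use c' in simp)
  thus ?thesis by (rule DERIV_imp_deriv)
qed

end

definition Kp :: "real \<Rightarrow> real \<Rightarrow> real" where "Kp h t = t^2 * (h - t)^2 / 24"

lemma Kp_bound: assumes "0 \<le> t" "t \<le> h" shows "0 \<le> Kp h t" "Kp h t \<le> h^4 / 384"
proof -
  have a: "0 \<le> t * (h - t)" using assms by simp
  have "h^2/4 - t * (h - t) = (t - h/2)^2" by (simp add: power2_eq_square algebra_simps)
  hence b: "t * (h - t) \<le> h^2/4" by (smt (verit) zero_le_power2)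
  have e: "Kp h t = (t * (h - t))^2 / 24" by (simp add: Kp_def power_mult_distrib)
  show "0 \<le> Kp h t" unfolding e by simp
  have "(t * (h - t))^2 \<le> (h^2/4)^2" using b a by (rule power_mono)
  moreover have "(h^2/4)^2 = h^4/16" by (simp add: power_divide power_mult[symmetric])
  ultimately have "(t * (h - t))^2 \<le> h^4/16" by simp
  thus "Kp h t \<le> h^4 / 384" unfolding e by simp
qed

lemma cell:
  fixes u :: "nat \<Rightarrow> real \<Rightarrow> real" and c h :: real
  assumes h: "0 < h"
    and der: "\<And>k x. k < 4 \<Longrightarrow> x \<in> {c..c+h} \<Longrightarrow> (u k has_real_derivative u (Suc k) x) (at x within {c..c+h})"
  shows "(\<lambda>x. Kp h (x - c) * u 4 x) integrable_on {c..c+h}"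
    "integral {c..c+h} (u 0) = h/2 * (u 0 c + u 0 (c+h)) - h^2/12 * (u 1 (c+h) - u 1 c)
        + integral {c..c+h} (\<lambda>x. Kp h (x - c) * u 4 x)"
proof -
  define K1 where "K1 t = (2*h^2*t - 6*h*t^2 + 4*t^3)/24" for t
  define K2 where "K2 t = (2*h^2 - 12*h*t + 12*t^2)/24" for t
  define K3 where "K3 t = (-12*h + 24*t)/24" for t
  define \<Phi> where "\<Phi> x = Kp h (x-c) * u 3 x - K1 (x-c) * u 2 x + K2 (x-c) * u 1 x - K3 (x-c) * u 0 x" for x
  have dd: "(\<Phi> has_real_derivative (Kp h (x - c) * u 4 x - u 0 x)) (at x within {c..c+h})"
    if x: "x \<in> {c..c+h}" for x
  proof -
    have D0: "(u 0 has_real_derivative u 1 x) (at x within {c..c+h})" using der[of 0 x] x by simp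
    have D1: "(u 1 has_real_derivative u 2 x) (at x within {c..c+h})" using der[of 1 x] x by (simp add: numeral_2_eq_2)
    have D2: "(u 2 has_real_derivative u 3 x) (at x within {c..c+h})" using der[of 2 x] x by (simp add: numeral_3_eq_3 numeral_2_eq_2)
    have D3: "(u 3 has_real_derivative u 4 x) (at x within {c..c+h})" using der[of 3 x] x by (simp add: numeral_3_eq_3 eval_nat_numeral)
    have P0: "((\<lambda>x. Kp h (x-c)) has_real_derivative K1 (x-c)) (at x within {c..c+h})"
      unfolding Kp_def K1_def
      by (auto intro!: derivative_eq_intros simp: field_simps power2_eq_square power3_eq_cube)
    have P1: "((\<lambda>x. K1 (x-c)) has_real_derivative K2 (x-c)) (at x within {c..c+h})"
      unfolding K1_def K2_def
      by (auto intro!: derivative_eq_intros simp: field_simps power2_eq_square power3_eq_cube)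
    have P2: "((\<lambda>x. K2 (x-c)) has_real_derivative K3 (x-c)) (at x within {c..c+h})"
      unfolding K2_def K3_def
      by (auto intro!: derivative_eq_intros simp: field_simps power2_eq_square power3_eq_cube)
    have P3: "((\<lambda>x. K3 (x-c)) has_real_derivative 1) (at x within {c..c+h})"
      unfolding K3_def
      by (auto intro!: derivative_eq_intros simp: field_simps)
    have "(\<Phi> has_real_derivative
        (K1 (x-c) * u 3 x + u 4 x * Kp h (x-c)) - (K2 (x-c) * u 2 x + u 3 x * K1 (x-c))
        + (K3 (x-c) * u 1 x + u 2 x * K2 (x-c)) - (1 * u 0 x + u 1 x * K3 (x-c))) (at x within {c..c+h})"
      unfolding \<Phi>_def
      by (intro DERIV_diff DERIV_add DERIV_mult P0 P1 P2 P3 D0 D1 D2 D3)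
    thus ?thesis by (simp add: algebra_simps)
  qed
  have ftc: "((\<lambda>x. Kp h (x - c) * u 4 x - u 0 x) has_integral (\<Phi> (c+h) - \<Phi> c)) {c..c+h}"
    by (rule fundamental_theorem_of_calculus) (use h dd in \<open>auto simp: has_real_derivative_iff_has_vector_derivative\<close>)
  have cont: "continuous_on {c..c+h} (u 0)"
    unfolding continuous_on_eq_continuous_within
  proof
    fix x assume x: "x \<in> {c..c+h}"
    show "continuous (at x within {c..c+h}) (u 0)" using der[of 0 x] x by (intro DERIV_continuous) simp
  qed
  have iu: "u 0 integrable_on {c..c+h}" by (rule integrable_continuous_interval[OF cont])
  have hi: "((\<lambda>x. (Kp h (x - c) * u 4 x - u 0 x) + u 0 x) has_integral (\<Phi> (c+h) - \<Phi> c) + integral {c..c+h} (u 0)) {c..c+h}"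
    by (rule has_integral_add[OF ftc integrable_integral[OF iu]])
  hence hi': "((\<lambda>x. Kp h (x - c) * u 4 x) has_integral (\<Phi> (c+h) - \<Phi> c) + integral {c..c+h} (u 0)) {c..c+h}"
    by simp
  thus "(\<lambda>x. Kp h (x - c) * u 4 x) integrable_on {c..c+h}" by (rule has_integral_integrable)
  have "\<Phi> (c+h) - \<Phi> c = h^2/12 * (u 1 (c+h) - u 1 c) - h/2 * (u 0 (c+h) + u 0 c)"
    unfolding \<Phi>_def Kp_def K1_def K2_def K3_def by (simp add: field_simps power2_eq_square power3_eq_cube)
  with integral_unique[OF hi'] show "integral {c..c+h} (u 0) = h/2 * (u 0 c + u 0 (c+h)) - h^2/12 * (u 1 (c+h) - u 1 c)
        + integral {c..c+h} (\<lambda>x. Kp h (x - c) * u 4 x)" by simp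
qed


lemma EM_sum:
  fixes u :: "nat \<Rightarrow> real \<Rightarrow> real" and P :: "real \<Rightarrow> real" and h :: real
  assumes h: "0 < h"
    and der: "\<And>k x. k < 4 \<Longrightarrow> 0 \<le> x \<Longrightarrow> (u k has_real_derivative u (Suc k) x) (at x within {0..})"
    and Pint: "\<And>T. P integrable_on {0..T}"
    and Pb: "\<And>x. 0 \<le> x \<Longrightarrow> \<bar>u 4 x\<bar> \<le> P x"
  shows "\<exists>E. h * (\<Sum>n<N. u 0 (real (n+1) * h)) = integral {0..real N * h} (u 0) - h/2 * u 0 0
            + h/2 * u 0 (real N * h) + h^2/12 * (u 1 (real N * h) - u 1 0) - E
          \<and> \<bar>E\<bar> \<le> h^4/384 * integral {0..real N * h} P"
proof (induction N)
  case 0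
  show ?case by (intro exI[of _ 0]) simp
next
  case (Suc N)
  then obtain E where E: "h * (\<Sum>n<N. u 0 (real (n+1) * h)) = integral {0..real N * h} (u 0) - h/2 * u 0 0
            + h/2 * u 0 (real N * h) + h^2/12 * (u 1 (real N * h) - u 1 0) - E"
      "\<bar>E\<bar> \<le> h^4/384 * integral {0..real N * h} P" by blast
  define c where "c = real N * h"
  have c0: "0 \<le> c" using h by (simp add: c_def)
  have cS: "real (Suc N) * h = c + h" by (simp add: c_def algebra_simps)
  have derc: "(u k has_real_derivative u (Suc k) x) (at x within {c..c+h})"
    if "k < 4" "x \<in> {c..c+h}" for k x
    using der[of k x] that c0 by (auto intro: DERIV_subset)
  have cl1: "(\<lambda>x. Kp h (x - c) * u 4 x) integrable_on {c..c+h}"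
    by (rule cell(1)[OF h]) (auto intro: derc)
  have cl2: "integral {c..c+h} (u 0) = h/2 * (u 0 c + u 0 (c+h)) - h^2/12 * (u 1 (c+h) - u 1 c)
        + integral {c..c+h} (\<lambda>x. Kp h (x - c) * u 4 x)"
    by (rule cell(2)[OF h]) (auto intro: derc)
  define IK where "IK = integral {c..c+h} (\<lambda>x. Kp h (x - c) * u 4 x)"
  have IKb: "norm IK \<le> integral {c..c+h} (\<lambda>x. h^4/384 * P x)"
    unfolding IK_def
  proof (rule integral_norm_bound_integral[OF cl1])
    show "(\<lambda>x. h^4/384 * P x) integrable_on {c..c+h}"
    proof -
      have Pc: "P integrable_on {c..c+h}" by (rule integrable_on_subinterval[OF Pint[of "c+h"]]) (use c0 in auto)
      show ?thesis by (rule has_integral_integrable[OF has_integral_mult_right[OF integrable_integral[OF Pc]]])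
    qed
  next
    fix x assume x: "x \<in> {c..c+h}"
    hence "0 \<le> x - c" "x - c \<le> h" by auto
    note kb = Kp_bound[OF this]
    have "\<bar>u 4 x\<bar> \<le> P x" using Pb x c0 by auto
    hence "Kp h (x - c) * \<bar>u 4 x\<bar> \<le> h^4/384 * P x"
      using kb by (intro mult_mono) auto
    thus "norm (Kp h (x - c) * u 4 x) \<le> h^4/384 * P x" using kb by (simp add: abs_mult)
  qed
  have u0i: "u 0 integrable_on {0..c+h}"
  proof (rule integrable_continuous_interval)
    show "continuous_on {0..c+h} (u 0)"
      unfolding continuous_on_eq_continuous_within
    proof
      fix x assume x: "x \<in> {0..c+h}"
      have "(u 0 has_real_derivative u 1 x) (at x within {0..c+h})"
        using der[of 0 x] x by (auto intro: DERIV_subset)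
      thus "continuous (at x within {0..c+h}) (u 0)" by (rule DERIV_continuous)
    qed
  qed
  have comb: "integral {0..c} (u 0) + integral {c..c+h} (u 0) = integral {0..c+h} (u 0)"
    by (rule Henstock_Kurzweil_Integration.integral_combine[OF c0 _ u0i]) (use h in simp)
  have combP: "integral {0..c} P + integral {c..c+h} P = integral {0..c+h} P"
    by (rule Henstock_Kurzweil_Integration.integral_combine[OF c0 _ Pint]) (use h in simp)
  show ?case
  proof (intro exI[of _ "E + IK"] conjI)
    show "h * (\<Sum>n<Suc N. u 0 (real (n+1) * h)) = integral {0..real (Suc N) * h} (u 0) - h/2 * u 0 0
            + h/2 * u 0 (real (Suc N) * h) + h^2/12 * (u 1 (real (Suc N) * h) - u 1 0) - (E + IK)"
    proof -
      have r: "real (N+1) * h = c + h" using cS by simp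
      define A where "A = h * (\<Sum>n<N. u 0 (real (n+1) * h))"
      define B where "B = h * (\<Sum>n<Suc N. u 0 (real (n+1) * h))"
      have AB: "B = A + h * u 0 (c + h)"
        unfolding A_def B_def by (simp only: sum.lessThan_Suc r distrib_left)
      have E1: "A = integral {0..c} (u 0) - h/2 * u 0 0
            + h/2 * u 0 c + h^2/12 * (u 1 c - u 1 0) - E" using E(1) unfolding A_def c_def .
      show ?thesis unfolding cS B_def[symmetric]
        by (simp only: AB E1 comb[symmetric] cl2[folded IK_def]) (simp add: field_simps)
    qed
    have "\<bar>E + IK\<bar> \<le> h^4/384 * integral {0..c} P + h^4/384 * integral {c..c+h} P"
      using E(2) IKb unfolding c_def[symmetric] by simp
    also have "\<dots> = h^4/384 * (integral {0..c} P + integral {c..c+h} P)" by (simp add: algebra_simps)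
    also have "\<dots> = h^4/384 * integral {0..c+h} P" by (simp only: combP)
    finally show "\<bar>E + IK\<bar> \<le> h^4/384 * integral {0..real (Suc N) * h} P" unfolding cS .
  qed
qed


lemma int_tendsto:
  fixes \<phi> :: "real \<Rightarrow> real"
  assumes "\<phi> absolutely_integrable_on {0..}"
  shows "((\<lambda>T. integral {0..T} \<phi>) \<longlongrightarrow> integral {0..} \<phi>) at_top"
proof -
  have "((\<lambda>b. set_lebesgue_integral lebesgue {0..b} \<phi>) \<longlongrightarrow> set_lebesgue_integral lebesgue {0..} \<phi>) at_top"
    by (rule tendsto_set_lebesgue_integral_at_top) (use assms in auto)
  moreover have "set_lebesgue_integral lebesgue {0..} \<phi> = integral {0..} \<phi>"
    by (rule set_lebesgue_integral_eq_integral(2)[OF assms])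
  moreover have "\<forall>\<^sub>F b in at_top. set_lebesgue_integral lebesgue {0..b} \<phi> = integral {0..b} \<phi>"
  proof (rule eventually_at_top_linorderI[of 0])
    fix b :: real assume "0 \<le> b"
    have "\<phi> absolutely_integrable_on {0..b}"
      by (rule absolutely_integrable_on_subinterval[OF assms]) auto
    thus "set_lebesgue_integral lebesgue {0..b} \<phi> = integral {0..b} \<phi>"
      by (rule set_lebesgue_integral_eq_integral(2))
  qed
  ultimately show ?thesis using tendsto_cong by fastforce
qed

lemma seq_at_top: "0 < h \<Longrightarrow> filterlim (\<lambda>N. real N * h) at_top sequentially"
  by (rule filterlim_at_top_mult_tendsto_pos[OF tendsto_const _ filterlim_real_sequentially])

context S4 begin

definition gq :: "real \<Rightarrow> nat \<Rightarrow> real \<Rightarrow> real" where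
 "gq \<beta> k x = (if k = 0 then fd 0 x else if k = 1 then fd 1 x - \<beta> * fd 0 x
   else if k = 2 then fd 2 x - 2*\<beta>*fd 1 x + \<beta>^2*fd 0 x
   else if k = 3 then fd 3 x - 3*\<beta>*fd 2 x + 3*\<beta>^2*fd 1 x - \<beta>^3*fd 0 x
   else fd 4 x - 4*\<beta>*fd 3 x + 6*\<beta>^2*fd 2 x - 4*\<beta>^3*fd 1 x + \<beta>^4*fd 0 x)"

definition gg :: "real \<Rightarrow> nat \<Rightarrow> real \<Rightarrow> real" where
  "gg \<beta> k x = exp (- \<beta> * x) * gq \<beta> k x"

lemma gq_deriv: assumes k: "k < 4" and x: "0 \<le> x"
  shows "(gq \<beta> k has_real_derivative (gq \<beta> (Suc k) x + \<beta> * gq \<beta> k x)) (at x within {0..})"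
proof -
  have F0: "(fd 0 has_real_derivative fd 1 x) (at x within {0..})" using fd_deriv[of 0 x] x by simp
  have F1: "(fd 1 has_real_derivative fd 2 x) (at x within {0..})" using fd_deriv[of 1 x] x by (simp add: numeral_2_eq_2)
  have F2: "(fd 2 has_real_derivative fd 3 x) (at x within {0..})" using fd_deriv[of 2 x] x by (simp add: numeral_3_eq_3 numeral_2_eq_2)
  have F3: "(fd 3 has_real_derivative fd 4 x) (at x within {0..})" using fd_deriv[of 3 x] x by (simp add: eval_nat_numeral)
  have e0: "gq \<beta> 0 = fd 0" by (simp add: gq_def fun_eq_iff)
  have e1: "gq \<beta> 1 = (\<lambda>x. fd 1 x - \<beta> * fd 0 x)" by (simp add: gq_def fun_eq_iff)
  have e2: "gq \<beta> 2 = (\<lambda>x. fd 2 x - 2*\<beta>*fd 1 x + \<beta>^2*fd 0 x)" by (simp add: gq_def fun_eq_iff)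
  have e3: "gq \<beta> 3 = (\<lambda>x. fd 3 x - 3*\<beta>*fd 2 x + 3*\<beta>^2*fd 1 x - \<beta>^3*fd 0 x)" by (simp add: gq_def fun_eq_iff)
  have e4: "gq \<beta> 4 = (\<lambda>x. fd 4 x - 4*\<beta>*fd 3 x + 6*\<beta>^2*fd 2 x - 4*\<beta>^3*fd 1 x + \<beta>^4*fd 0 x)" by (simp add: gq_def fun_eq_iff)
  have "k = 0 \<or> k = 1 \<or> k = 2 \<or> k = 3" using k by auto
  then show ?thesis
  proof (elim disjE)
    assume "k = 0"
    have "gq \<beta> 1 x + \<beta> * gq \<beta> 0 x = fd 1 x" by (simp add: gq_def)
    hence "(gq \<beta> 0 has_real_derivative gq \<beta> 1 x + \<beta> * gq \<beta> 0 x) (at x within {0..})"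
      using F0 by (simp add: e0)
    thus ?thesis using `k = 0` by (simp add: eval_nat_numeral)
  next
    assume "k = 1"
    have V: "gq \<beta> 2 x + \<beta> * gq \<beta> 1 x = fd 2 x - \<beta> * fd 1 x" by (simp add: gq_def algebra_simps power2_eq_square)
    have "(gq \<beta> 1 has_real_derivative fd 2 x - \<beta> * fd 1 x) (at x within {0..})"
      unfolding e1 by (intro DERIV_diff DERIV_cmult F0 F1)
    hence "(gq \<beta> 1 has_real_derivative gq \<beta> 2 x + \<beta> * gq \<beta> 1 x) (at x within {0..})" by (simp only: V)
    thus ?thesis using `k = 1` by (simp add: eval_nat_numeral)
  next
    assume "k = 2"
    have V: "gq \<beta> 3 x + \<beta> * gq \<beta> 2 x = fd 3 x - 2*\<beta>*fd 2 x + \<beta>^2*fd 1 x"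
      by (simp add: gq_def algebra_simps power2_eq_square power3_eq_cube)
    have "(gq \<beta> 2 has_real_derivative fd 3 x - 2*\<beta>*fd 2 x + \<beta>^2*fd 1 x) (at x within {0..})"
      unfolding e2 by (intro DERIV_diff DERIV_add DERIV_cmult F0 F1 F2)
    hence "(gq \<beta> 2 has_real_derivative gq \<beta> 3 x + \<beta> * gq \<beta> 2 x) (at x within {0..})" by (simp only: V)
    thus ?thesis using `k = 2` by (simp add: eval_nat_numeral)
  next
    assume "k = 3"
    have V: "gq \<beta> 4 x + \<beta> * gq \<beta> 3 x = fd 4 x - 3*\<beta>*fd 3 x + 3*\<beta>^2*fd 2 x - \<beta>^3*fd 1 x"
      by (simp add: gq_def algebra_simps power2_eq_square power3_eq_cube eval_nat_numeral)
    have "(gq \<beta> 3 has_real_derivative fd 4 x - 3*\<beta>*fd 3 x + 3*\<beta>^2*fd 2 x - \<beta>^3*fd 1 x) (at x within {0..})"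
      unfolding e3 by (intro DERIV_diff DERIV_add DERIV_cmult F0 F1 F2 F3)
    hence "(gq \<beta> 3 has_real_derivative gq \<beta> 4 x + \<beta> * gq \<beta> 3 x) (at x within {0..})" by (simp only: V)
    thus ?thesis using `k = 3` by (simp add: eval_nat_numeral)
  qed
qed

lemma gg_deriv: assumes k: "k < 4" and x: "0 \<le> x"
  shows "(gg \<beta> k has_real_derivative gg \<beta> (Suc k) x) (at x within {0..})"
proof -
  have E: "((\<lambda>x. exp (- \<beta> * x)) has_real_derivative exp (- \<beta> * x) * (- \<beta>)) (at x within {0..})"
    by (auto intro!: derivative_eq_intros)
  have "((\<lambda>x. exp (- \<beta> * x) * gq \<beta> k x) has_real_derivative
      exp (- \<beta> * x) * (- \<beta>) * gq \<beta> k x + (gq \<beta> (Suc k) x + \<beta> * gq \<beta> k x) * exp (- \<beta> * x)) (at x within {0..})"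
    by (rule DERIV_mult[OF E gq_deriv[OF k x]])
  thus ?thesis unfolding gg_def by (simp add: algebra_simps)
qed

definition Pf :: "real \<Rightarrow> real \<Rightarrow> real \<Rightarrow> real" where
  "Pf a B x = \<bar>exp (- a * x) * fd 4 x\<bar> + 4*B*\<bar>exp (- a * x) * fd 3 x\<bar> + 6*B^2*\<bar>exp (- a * x) * fd 2 x\<bar>
      + 4*B^3*\<bar>exp (- a * x) * fd 1 x\<bar> + B^4*\<bar>exp (- a * x) * fd 0 x\<bar>"

lemma Pf_int: assumes "a \<in> G" shows "Pf a B integrable_on {0..}"
proof -
  have n: "(\<lambda>x. \<bar>exp (- a * x) * fd j x\<bar>) integrable_on {0..}" if "j \<le> 4" for j
    using absint[OF assms that] by (simp add: absolutely_integrable_on_def)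
  show ?thesis unfolding Pf_def
    by (intro integrable_add int_cmul n) auto
qed

lemma Pf_nonneg: "0 \<le> B \<Longrightarrow> 0 \<le> Pf a B x"
  unfolding Pf_def by simp

lemma gg4_bound: assumes "a \<le> \<beta>" "\<bar>\<beta>\<bar> \<le> B" "0 \<le> x"
  shows "\<bar>gg \<beta> 4 x\<bar> \<le> Pf a B x"
proof -
  define e where "e = exp (- a * x)"
  have e0: "0 < e" by (simp add: e_def)
  have ee: "exp (- \<beta> * x) \<le> e" unfolding e_def using assms by (simp add: mult_right_mono)
  have B0: "0 \<le> B" using assms(2) by simp
  have pw: "\<bar>\<beta>\<bar>^k \<le> B^k" for k using assms(2) by (intro power_mono) auto
  have "\<bar>gq \<beta> 4 x\<bar> \<le> \<bar>fd 4 x\<bar> + 4*\<bar>\<beta>\<bar>*\<bar>fd 3 x\<bar> + 6*\<bar>\<beta>\<bar>^2*\<bar>fd 2 x\<bar> + 4*\<bar>\<beta>\<bar>^3*\<bar>fd 1 x\<bar> + \<bar>\<beta>\<bar>^4*\<bar>fd 0 x\<bar>"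
  proof -
    have t: "\<And>a b c d e::real. \<bar>a - b + c - d + e\<bar> \<le> \<bar>a\<bar> + \<bar>b\<bar> + \<bar>c\<bar> + \<bar>d\<bar> + \<bar>e\<bar>" by linarith
    have "gq \<beta> 4 x = fd 4 x - 4*\<beta>*fd 3 x + 6*\<beta>^2*fd 2 x - 4*\<beta>^3*fd 1 x + \<beta>^4*fd 0 x"
      by (simp add: gq_def)
    hence "\<bar>gq \<beta> 4 x\<bar> \<le> \<bar>fd 4 x\<bar> + \<bar>4*\<beta>*fd 3 x\<bar> + \<bar>6*\<beta>^2*fd 2 x\<bar> + \<bar>4*\<beta>^3*fd 1 x\<bar> + \<bar>\<beta>^4*fd 0 x\<bar>"
      using t by presburger
    thus ?thesis by (simp add: abs_mult power_abs)
  qed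
  also have "\<dots> \<le> \<bar>fd 4 x\<bar> + 4*B*\<bar>fd 3 x\<bar> + 6*B^2*\<bar>fd 2 x\<bar> + 4*B^3*\<bar>fd 1 x\<bar> + B^4*\<bar>fd 0 x\<bar>"
    using pw[of 1] pw[of 2] pw[of 3] pw[of 4]
    by (intro add_mono mult_right_mono mult_left_mono order_refl) auto
  finally have q: "\<bar>gq \<beta> 4 x\<bar> \<le> \<bar>fd 4 x\<bar> + 4*B*\<bar>fd 3 x\<bar> + 6*B^2*\<bar>fd 2 x\<bar> + 4*B^3*\<bar>fd 1 x\<bar> + B^4*\<bar>fd 0 x\<bar>" .
  have "\<bar>gg \<beta> 4 x\<bar> = exp (- \<beta> * x) * \<bar>gq \<beta> 4 x\<bar>" by (simp add: gg_def abs_mult)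
  also have "\<dots> \<le> e * (\<bar>fd 4 x\<bar> + 4*B*\<bar>fd 3 x\<bar> + 6*B^2*\<bar>fd 2 x\<bar> + 4*B^3*\<bar>fd 1 x\<bar> + B^4*\<bar>fd 0 x\<bar>)"
    by (rule mult_mono[OF ee q]) (use e0 in auto)
  also have "\<dots> = Pf a B x" unfolding Pf_def e_def[symmetric] using e0 by (simp add: abs_mult algebra_simps)
  finally show ?thesis .
qed

end

context S4 begin

lemma gg0: "gg \<beta> 0 = (\<lambda>x. exp (- \<beta> * x) * f x)"
  by (simp add: gg_def gq_def fd0 fun_eq_iff)

lemma gg1: "gg \<beta> 1 = (\<lambda>x. exp (- \<beta> * x) * fd 1 x - \<beta> * (exp (- \<beta> * x) * fd 0 x))"
  by (simp add: gg_def gq_def fun_eq_iff algebra_simps)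

lemma EM_limit:
  assumes \<beta>: "\<beta> \<in> G" and a: "a \<in> G" "a \<le> \<beta>" and B: "\<bar>\<beta>\<bar> \<le> B" and h: "0 < h"
    and sm: "summable (\<lambda>n. gg \<beta> 0 (real (n+1) * h))"
  shows "\<exists>E. h * (\<Sum>n. gg \<beta> 0 (real (n+1) * h)) = Lap f \<beta> - h/2 - h^2/12 * (fd 1 0 - \<beta>) - E
           \<and> \<bar>E\<bar> \<le> h^4/384 * integral {0..} (Pf a B)"
proof -
  have Pint: "Pf a B integrable_on {0..T}" for T
    by (rule integrable_on_subinterval[OF Pf_int[OF a(1)]]) auto
  have Pb: "\<bar>gg \<beta> 4 x\<bar> \<le> Pf a B x" if "0 \<le> x" for x
    by (rule gg4_bound[OF a(2) B that])
  have "\<forall>N. \<exists>E. h * (\<Sum>n<N. gg \<beta> 0 (real (n+1) * h)) = integral {0..real N * h} (gg \<beta> 0) - h/2 * gg \<beta> 0 0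
            + h/2 * gg \<beta> 0 (real N * h) + h^2/12 * (gg \<beta> 1 (real N * h) - gg \<beta> 1 0) - E
          \<and> \<bar>E\<bar> \<le> h^4/384 * integral {0..real N * h} (Pf a B)"
    using EM_sum[of h "gg \<beta>" "Pf a B", OF h gg_deriv Pint Pb] by blast
  then obtain Ef where Ef: "\<And>N. h * (\<Sum>n<N. gg \<beta> 0 (real (n+1) * h)) = integral {0..real N * h} (gg \<beta> 0) - h/2 * gg \<beta> 0 0
            + h/2 * gg \<beta> 0 (real N * h) + h^2/12 * (gg \<beta> 1 (real N * h) - gg \<beta> 1 0) - Ef N"
      "\<And>N. \<bar>Ef N\<bar> \<le> h^4/384 * integral {0..real N * h} (Pf a B)"
    by (metis choice)
  have g00: "gg \<beta> 0 0 = 1" by (simp add: gg0 f0)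
  have g10: "gg \<beta> 1 0 = fd 1 0 - \<beta>" unfolding gg1 by (simp add: fd0 f0)
  have Efe: "Ef = (\<lambda>N. integral {0..real N * h} (gg \<beta> 0) - h/2 * gg \<beta> 0 0
            + h/2 * gg \<beta> 0 (real N * h) + h^2/12 * (gg \<beta> 1 (real N * h) - gg \<beta> 1 0)
            - h * (\<Sum>n<N. gg \<beta> 0 (real (n+1) * h)))"
    using Ef(1) by (auto simp: fun_eq_iff algebra_simps)
  have ai: "gg \<beta> 0 absolutely_integrable_on {0..}" unfolding gg0 using absint[OF \<beta>, of 0] by (simp add: fd0)
  have L1: "(\<lambda>N. h * (\<Sum>n<N. gg \<beta> 0 (real (n+1) * h))) \<longlonglongrightarrow> h * (\<Sum>n. gg \<beta> 0 (real (n+1) * h))"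
    by (intro tendsto_mult_left summable_LIMSEQ sm)
  have L2: "(\<lambda>N. integral {0..real N * h} (gg \<beta> 0)) \<longlonglongrightarrow> integral {0..} (gg \<beta> 0)"
    using filterlim_compose[OF int_tendsto[OF ai] seq_at_top[OF h]] .
  have v0: "(gg \<beta> 0 \<longlongrightarrow> 0) at_top" unfolding gg0 using vanish[of \<beta> 0] \<beta> by (simp add: G_def fd0)
  have v1: "(gg \<beta> 1 \<longlongrightarrow> 0) at_top" unfolding gg1
    using tendsto_diff[OF vanish[of \<beta> 1] tendsto_mult_right_zero[OF vanish[of \<beta> 0], of \<beta>]] \<beta> by (simp add: G_def)
  have L3: "(\<lambda>N. gg \<beta> 0 (real N * h)) \<longlonglongrightarrow> 0" using filterlim_compose[OF v0 seq_at_top[OF h]] .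
  have L4: "(\<lambda>N. gg \<beta> 1 (real N * h)) \<longlonglongrightarrow> 0" using filterlim_compose[OF v1 seq_at_top[OF h]] .
  define E where "E = integral {0..} (gg \<beta> 0) - h/2 * gg \<beta> 0 0 + h/2 * 0 + h^2/12 * (0 - gg \<beta> 1 0)
            - h * (\<Sum>n. gg \<beta> 0 (real (n+1) * h))"
  have LE: "Ef \<longlonglongrightarrow> E" unfolding Efe E_def
    by (intro tendsto_intros L1 L2 L3 L4)
  have bnd: "\<bar>Ef N\<bar> \<le> h^4/384 * integral {0..} (Pf a B)" for N
  proof -
    have "integral {0..real N * h} (Pf a B) \<le> integral {0..} (Pf a B)"
      by (rule integral_subset_le[OF _ Pint Pf_int[OF a(1)]]) (use B in \<open>auto intro: Pf_nonneg\<close>)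
    hence "h^4/384 * integral {0..real N * h} (Pf a B) \<le> h^4/384 * integral {0..} (Pf a B)"
      by (rule mult_left_mono) simp
    thus ?thesis using Ef(2)[of N] by linarith
  qed
  have "\<bar>E\<bar> \<le> h^4/384 * integral {0..} (Pf a B)"
    by (rule LIMSEQ_le_const2[OF tendsto_rabs[OF LE]]) (use bnd in auto)
  moreover have "integral {0..} (gg \<beta> 0) = Lap f \<beta>" by (simp add: gg0 Lap_eq[OF \<beta>])
  moreover have "h * (\<Sum>n. gg \<beta> 0 (real (n+1) * h)) = Lap f \<beta> - h/2 - h^2/12 * (fd 1 0 - \<beta>) - E"
    unfolding E_def g10 g00 using \<open>integral {0..} (gg \<beta> 0) = Lap f \<beta>\<close> by (simp add: field_simps)
  ultimately show ?thesis by blast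
qed

end

context S4 begin

lemma cmp_bound:
  assumes g: "\<gamma> \<in> G" and h: "0 < h" and r: "0 \<le> 1 - \<gamma> * h"
  shows "summable (\<lambda>n. f (real (n+1) * h) * (1 - \<gamma> * h) ^ (n+1))"
    "0 \<le> (\<Sum>n. f (real (n+1) * h) * (1 - \<gamma> * h) ^ (n+1))"
    "(\<Sum>n. f (real (n+1) * h) * (1 - \<gamma> * h) ^ (n+1)) \<le> exp (\<bar>\<gamma>\<bar> * h) / h * J 0 \<gamma>"
proof -
  define t where "t n = f (real (n+1) * h) * (1 - \<gamma> * h) ^ (n+1)" for n
  define \<phi> where "\<phi> x = exp (- \<gamma> * x) * f x" for x
  define c where "c = exp (\<bar>\<gamma>\<bar> * h)"
  have \<phi>i: "\<phi> integrable_on {0..}" unfolding \<phi>_def using absint[OF g, of 0]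
    by (simp add: fd0 absolutely_integrable_on_def)
  have \<phi>0: "0 \<le> \<phi> x" if "0 \<le> x" for x unfolding \<phi>_def using nonneg[OF that] by simp
  have t0: "0 \<le> t n" for n unfolding t_def using r h by (intro mult_nonneg_nonneg nonneg) auto
  have cellb: "h * t n \<le> c * integral {real n * h..real n * h + h} \<phi>" for n
  proof -
    define a where "a = real n * h"
    have a0: "0 \<le> a" using h by (simp add: a_def)
    have \<phi>c: "\<phi> integrable_on {a..a+h}" by (rule integrable_on_subinterval[OF \<phi>i]) (use a0 in auto)
    have pt: "t n \<le> c * \<phi> x" if x: "x \<in> {a..a+h}" for x
    proof -
      have x0: "0 \<le> x" using x a0 by auto
      have n1: "real (n+1) * h = a + h" by (simp add: a_def algebra_simps)
      have "(1 - \<gamma> * h) ^ (n+1) \<le> exp (- \<gamma> * h) ^ (n+1)"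
        using r exp_ge_add_one_self[of "- \<gamma> * h"] by (intro power_mono) auto
      also have "\<dots> = exp (real (n+1) * (- \<gamma> * h))" by (rule exp_of_nat_mult[symmetric])
      also have "real (n+1) * (- \<gamma> * h) = - \<gamma> * (a + h)" unfolding n1[symmetric] by (simp add: algebra_simps)
      hence "exp (real (n+1) * (- \<gamma> * h)) = exp (- \<gamma> * (a + h))" by simp
      also have "\<dots> \<le> exp (\<bar>\<gamma>\<bar> * h + - \<gamma> * x)"
      proof -
        have "\<gamma> * x - \<gamma> * (a + h) \<le> \<bar>\<gamma>\<bar> * h"
        proof (cases "\<gamma> \<ge> 0")
          case True
          have "\<gamma> * x \<le> \<gamma> * (a + h)" using x True by (intro mult_left_mono) auto
          thus ?thesis using True h by (smt (verit) mult_nonneg_nonneg)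
        next
          case False
          have "(- \<gamma>) * (a + h - x) \<le> (- \<gamma>) * h" using x False by (intro mult_left_mono) auto
          thus ?thesis using False by (simp add: algebra_simps)
        qed
        thus ?thesis by simp
      qed
      also have "\<dots> = c * exp (- \<gamma> * x)" by (simp add: c_def mult_exp_exp)
      finally have A: "(1 - \<gamma> * h) ^ (n+1) \<le> c * exp (- \<gamma> * x)" .
      have B: "f (real (n+1) * h) \<le> f x" unfolding n1 using x x0 by (intro noninc) auto
      have "t n = f (real (n+1) * h) * (1 - \<gamma> * h) ^ (n+1)" by (simp add: t_def)
      also have "\<dots> \<le> f x * (c * exp (- \<gamma> * x))"
        by (rule mult_mono[OF B A]) (use nonneg[OF x0] r in auto)
      also have "\<dots> = c * \<phi> x" by (simp add: \<phi>_def)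
      finally show ?thesis .
    qed
    have "integral {a..a+h} (\<lambda>x. t n) \<le> integral {a..a+h} (\<lambda>x. c * \<phi> x)"
      by (rule integral_le) (use pt \<phi>c int_cmul in auto)
    thus ?thesis using h unfolding a_def[symmetric] by simp
  qed
  have psum: "h * (\<Sum>n<N. t n) \<le> c * integral {0..real N * h} \<phi>" for N
  proof (induction N)
    case 0 show ?case by simp
  next
    case (Suc N)
    have e: "real (Suc N) * h = real N * h + h" by (simp add: algebra_simps)
    have comb: "integral {0..real N * h} \<phi> + integral {real N * h..real N * h + h} \<phi> = integral {0..real N * h + h} \<phi>"
      by (rule Henstock_Kurzweil_Integration.integral_combine) (use h in \<open>auto intro: integrable_on_subinterval[OF \<phi>i]\<close>)
    have "h * (\<Sum>n<Suc N. t n) = h * (\<Sum>n<N. t n) + h * t N" by (simp add: algebra_simps)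
    also have "\<dots> \<le> c * integral {0..real N * h} \<phi> + c * integral {real N * h..real N * h + h} \<phi>"
      using Suc.IH cellb[of N] by simp
    also have "\<dots> = c * integral {0..real (Suc N) * h} \<phi>" unfolding e comb[symmetric] by (simp add: algebra_simps)
    finally show ?case .
  qed
  have "\<phi> = (\<lambda>x. x^0 * exp (- \<gamma> * x) * f x)" by (simp add: fun_eq_iff \<phi>_def)
  hence Jeq: "integral {0..} \<phi> = J 0 \<gamma>" by (simp only: J_def)
  have bnd: "(\<Sum>n<N. t n) \<le> c / h * J 0 \<gamma>" for N
  proof -
    have "integral {0..real N * h} \<phi> \<le> integral {0..} \<phi>"
      by (rule integral_subset_le[OF _ integrable_on_subinterval[OF \<phi>i] \<phi>i]) (auto intro: \<phi>0)
    hence "h * (\<Sum>n<N. t n) \<le> c * J 0 \<gamma>" using psum[of N] Jeq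
      by (smt (verit) c_def exp_gt_zero mult_left_mono)
    thus ?thesis using h by (simp add: field_simps)
  qed
  have teq: "(\<lambda>n. f (real (n+1) * h) * (1 - \<gamma> * h) ^ (n+1)) = t" by (rule ext) (simp only: t_def)
  have sm: "summable t" by (rule summableI_nonneg_bounded[OF t0 bnd])
  thus "summable (\<lambda>n. f (real (n+1) * h) * (1 - \<gamma> * h) ^ (n+1))" unfolding teq .
  show "0 \<le> (\<Sum>n. f (real (n+1) * h) * (1 - \<gamma> * h) ^ (n+1))"
    unfolding teq by (rule suminf_nonneg[OF sm t0])
  show "(\<Sum>n. f (real (n+1) * h) * (1 - \<gamma> * h) ^ (n+1)) \<le> exp (\<bar>\<gamma>\<bar> * h) / h * J 0 \<gamma>"
    unfolding teq c_def[symmetric] by (rule suminf_le_const[OF sm bnd])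
qed

end

lemma alg_identity:
  fixes h F J0b fp b E J0 D J1 J2 R g :: real
  assumes h: "h \<noteq> 0"
    and e1: "h * F = J0b - h/2 - h^2/12 * (fp - b) - E"
    and e2: "J0b = J0 - (h*D) * J1 + (h*D)^2/2 * J2 + R"
    and e3: "b = g + h * D"
  shows "F - (J0/h + (1/2 * g^2 * (- J1) - 1/2)) - h * (1/3 * g^3 * (- J1) + 1/8 * g^4 * J2 + 1/12 * (g - fp))
       = - J1 * (D - g^2/2 - g^3*h/3) + h/2 * J2 * (D^2 - g^4/4) + R/h + h^2*D/12 - E/h"
proof -
  have F: "F = (J0b - h/2 - h^2/12 * (fp - b) - E) / h" using e1 h by (simp add: field_simps)
  show ?thesis unfolding F e2 e3 using h
    by (simp add: field_simps power2_eq_square power3_eq_cube eval_nat_numeral)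
qed

lemma beta_facts:
  fixes h \<gamma> \<Gamma> :: real
  assumes h: "0 < h" and g: "\<bar>\<gamma>\<bar> \<le> \<Gamma>" and G1: "1 \<le> \<Gamma>" and p: "\<Gamma> * h \<le> 1/2"
  defines "\<beta> \<equiv> - ln (1 - \<gamma> * h) / h"
  defines "D \<equiv> (\<beta> - \<gamma>) / h"
  shows "exp (- \<beta> * h) = 1 - \<gamma> * h" "0 \<le> D" "\<bar>D - \<gamma>^2/2 - \<gamma>^3*h/3\<bar> \<le> 2 * \<Gamma>^4 * h^2"
    "\<bar>D - \<gamma>^2/2\<bar> \<le> 2 * \<Gamma>^3 * h" "D \<le> 2 * \<Gamma>^2" "\<beta> = \<gamma> + h * D" "\<bar>\<beta>\<bar> \<le> 2 * \<Gamma>" "\<gamma> \<le> \<beta>"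
proof -
  define u where "u = \<gamma> * h"
  have gh: "\<bar>\<gamma>\<bar> * h \<le> \<Gamma> * h" using g h by (intro mult_right_mono) auto
  have "\<bar>u\<bar> = \<bar>\<gamma>\<bar> * h" using h by (simp add: u_def abs_mult)
  hence u: "\<bar>u\<bar> \<le> 1/2" using gh p by linarith
  have u1: "0 < 1 - u" using u by simp
  define L where "L = - ln (1 - u)"
  have \<beta>L: "\<beta> = L / h" by (simp add: \<beta>_def L_def u_def)
  have DL: "D = (L - u) / h^2" unfolding D_def \<beta>L u_def using h by (simp add: field_simps power2_eq_square)
  show "exp (- \<beta> * h) = 1 - \<gamma> * h" unfolding \<beta>L L_def using h u1 by (simp add: u_def)
  have Lu: "u \<le> L" using ln_le_minus_one[OF u1] by (simp add: L_def)
  show D0: "0 \<le> D" unfolding DL using Lu by simp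
  have e1: "D - \<gamma>^2/2 - \<gamma>^3*h/3 = (L - u - u^2/2 - u^3/3) / h^2"
    unfolding DL u_def using h by (simp add: field_simps power2_eq_square power3_eq_cube)
  have lr: "\<bar>L - u - u^2/2 - u^3/3\<bar> \<le> 2 * u^4" using ln_rem[OF u] by (simp add: L_def)
  have u4: "u^4 = \<gamma>^4 * h^4" by (simp add: u_def power_mult_distrib)
  have ga: "\<gamma>^4 = \<bar>\<gamma>\<bar>^4" "\<gamma>^2 = \<bar>\<gamma>\<bar>^2" by (simp_all add: power_even_abs_numeral)
  have g4: "\<gamma>^4 \<le> \<Gamma>^4" unfolding ga using g by (intro power_mono) auto
  have g2: "\<gamma>^2 \<le> \<Gamma>^2" unfolding ga using g by (intro power_mono) auto
  have g3: "\<bar>\<gamma>\<bar>^3 \<le> \<Gamma>^3" using g by (intro power_mono) auto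
  have h2: "0 < h^2" using h by simp
  have "\<bar>D - \<gamma>^2/2 - \<gamma>^3*h/3\<bar> = \<bar>L - u - u^2/2 - u^3/3\<bar> / h^2" unfolding e1 using h2 by (simp add: abs_div)
  also have "\<dots> \<le> 2 * u^4 / h^2" using lr h2 by (simp add: divide_right_mono)
  also have "\<dots> = 2 * \<gamma>^4 * h^2" unfolding u4 using h by (simp add: field_simps eval_nat_numeral)
  also have "\<dots> \<le> 2 * \<Gamma>^4 * h^2" using g4 h2 by simp
  finally show E1: "\<bar>D - \<gamma>^2/2 - \<gamma>^3*h/3\<bar> \<le> 2 * \<Gamma>^4 * h^2" .
  have A: "\<bar>\<gamma>^3*h/3\<bar> \<le> \<Gamma>^3*h/3" using g3 h by (simp add: abs_mult power_abs divide_right_mono mult_right_mono)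
  have G0: "0 \<le> \<Gamma>" using G1 by simp
  have B: "\<Gamma>^4 * h^2 \<le> \<Gamma>^3 * h * (1/2)"
  proof -
    have "\<Gamma>^4 * h^2 = (\<Gamma>^3 * h) * (\<Gamma> * h)" by (simp add: eval_nat_numeral algebra_simps)
    also have "\<dots> \<le> (\<Gamma>^3 * h) * (1/2)" using p G0 h by (intro mult_left_mono) auto
    finally show ?thesis .
  qed
  have C: "\<Gamma>^3 * h \<le> \<Gamma>^2 * (1/2)"
  proof -
    have "\<Gamma>^3 * h = \<Gamma>^2 * (\<Gamma> * h)" by (simp add: eval_nat_numeral algebra_simps)
    also have "\<dots> \<le> \<Gamma>^2 * (1/2)" using p by (intro mult_left_mono) auto
    finally show ?thesis .
  qed
  show DG: "\<bar>D - \<gamma>^2/2\<bar> \<le> 2 * \<Gamma>^3 * h" using E1 A B by linarith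
  show D2: "D \<le> 2 * \<Gamma>^2" using DG g2 C by linarith
  show be: "\<beta> = \<gamma> + h * D" unfolding D_def using h by simp
  have "h * D \<le> h * (2 * \<Gamma>^2)" using D2 h by (intro mult_left_mono) auto
  also have "h * (2 * \<Gamma>^2) = 2 * \<Gamma> * (\<Gamma> * h)" by (simp add: power2_eq_square)
  also have "\<dots> \<le> 2 * \<Gamma> * (1/2)" using p G0 by (intro mult_left_mono) auto
  finally have hD: "h * D \<le> \<Gamma>" by simp
  have hD0: "0 \<le> h * D" using h D0 by simp
  show "\<bar>\<beta>\<bar> \<le> 2 * \<Gamma>" unfolding be using hD hD0 g by linarith
  show "\<gamma> \<le> \<beta>" unfolding be using hD0 by simp
qed


context S4 begin

lemma master:
  assumes a: "a \<in> G" and G1: "1 \<le> \<Gamma>" and aG: "\<bar>a\<bar> \<le> \<Gamma>"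
  shows "\<exists>C. \<forall>h \<gamma>. 0 < h \<and> \<Gamma> * h \<le> 1/2 \<and> a \<le> \<gamma> \<and> \<gamma> \<le> \<Gamma> \<longrightarrow>
    summable (\<lambda>n. f (real (n+1) * h) * (1 - \<gamma> * h) ^ (n+1)) \<and>
    \<bar>(\<Sum>n. f (real (n+1) * h) * (1 - \<gamma> * h) ^ (n+1)) - (Lap f \<gamma> / h + Mcal f \<gamma>) - h * Ncal f (fd 1 0) \<gamma>\<bar> \<le> C * h^2"
proof -
  define PI where "PI = integral {0..} (Pf a (2*\<Gamma>))"
  define C where "C = 2*\<Gamma>^4 * J 1 a + 3*\<Gamma>^5 * J 2 a + 2*\<Gamma>^6 * J 3 a + \<Gamma>^2 + PI"
  have PI0: "0 \<le> PI" unfolding PI_def using G1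
    by (intro integral_nonneg[OF Pf_int[OF a]]) (auto intro: Pf_nonneg)
  show ?thesis
  proof (intro exI[of _ C] allI impI conjI)
    fix h \<gamma> :: real
    assume as: "0 < h \<and> \<Gamma> * h \<le> 1/2 \<and> a \<le> \<gamma> \<and> \<gamma> \<le> \<Gamma>"
    hence h: "0 < h" and p: "\<Gamma> * h \<le> 1/2" and ag: "a \<le> \<gamma>" and gG: "\<gamma> \<le> \<Gamma>" by auto
    have g: "\<bar>\<gamma>\<bar> \<le> \<Gamma>" using ag gG aG by linarith
    have \<gamma>G: "\<gamma> \<in> G" using G_up[OF a ag] .
    have "1 * h \<le> \<Gamma> * h" using G1 h by (intro mult_right_mono) auto
    hence hle: "h \<le> 1/2" using p by linarith
    have gh: "\<bar>\<gamma> * h\<bar> \<le> 1/2"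
    proof -
      have "\<bar>\<gamma>\<bar> * h \<le> \<Gamma> * h" using g h by (intro mult_right_mono) auto
      moreover have "\<bar>\<gamma> * h\<bar> = \<bar>\<gamma>\<bar> * h" using h by (simp add: abs_mult)
      ultimately show ?thesis using p by linarith
    qed
    have r: "0 \<le> 1 - \<gamma> * h" using gh by simp
    show sm: "summable (\<lambda>n. f (real (n+1) * h) * (1 - \<gamma> * h) ^ (n+1))" by (rule cmp_bound(1)[OF \<gamma>G h r])
    define \<beta> where "\<beta> = - ln (1 - \<gamma> * h) / h"
    define D where "D = (\<beta> - \<gamma>) / h"
    note bf = beta_facts[OF h g G1 p, folded \<beta>_def, folded D_def]
    have \<beta>G: "\<beta> \<in> G" using G_up[OF \<gamma>G bf(8)] .
    have a\<beta>: "a \<le> \<beta>" using ag bf(8) by linarith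
    have seq: "gg \<beta> 0 (real (n+1) * h) = f (real (n+1) * h) * (1 - \<gamma> * h) ^ (n+1)" for n
    proof -
      have "exp (- \<beta> * (real (n+1) * h)) = exp (real (n+1) * (- \<beta> * h))" by (simp add: algebra_simps)
      also have "\<dots> = exp (- \<beta> * h) ^ (n+1)" by (rule exp_of_nat_mult)
      finally show ?thesis unfolding gg0 bf(1) by simp
    qed
    have sm': "summable (\<lambda>n. gg \<beta> 0 (real (n+1) * h))" unfolding seq by (rule sm)
    obtain E where E: "h * (\<Sum>n. gg \<beta> 0 (real (n+1) * h)) = Lap f \<beta> - h/2 - h^2/12 * (fd 1 0 - \<beta>) - E"
        "\<bar>E\<bar> \<le> h^4/384 * integral {0..} (Pf a (2*\<Gamma>))"
      using EM_limit[OF \<beta>G a a\<beta> bf(7) h sm'] by blast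
    define F where "F = (\<Sum>n. f (real (n+1) * h) * (1 - \<gamma> * h) ^ (n+1))"
    have EF: "h * F = Lap f \<beta> - h/2 - h^2/12 * (fd 1 0 - \<beta>) - E" using E(1) unfolding seq F_def .
    have hD0: "0 \<le> h * D" using bf(2) h by simp
    define R where "R = J 0 \<beta> - J 0 \<gamma> + (h*D) * J 1 \<gamma> - (h*D)^2/2 * J 2 \<gamma>"
    have Rb: "\<bar>R\<bar> \<le> (h*D)^3/6 * J 3 \<gamma>" unfolding R_def bf(6) using J_taylor3[OF \<gamma>G hD0] by simp
    have LapB: "Lap f \<beta> = J 0 \<gamma> - (h*D) * J 1 \<gamma> + (h*D)^2/2 * J 2 \<gamma> + R"
      unfolding R_def J0_Lap[OF \<beta>G] by simp
    have T: "F - (J 0 \<gamma>/h + (1/2 * \<gamma>^2 * (- J 1 \<gamma>) - 1/2)) - h * (1/3 * \<gamma>^3 * (- J 1 \<gamma>) + 1/8 * \<gamma>^4 * J 2 \<gamma> + 1/12 * (\<gamma> - fd 1 0))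
       = - J 1 \<gamma> * (D - \<gamma>^2/2 - \<gamma>^3*h/3) + h/2 * J 2 \<gamma> * (D^2 - \<gamma>^4/4) + R/h + h^2*D/12 - E/h"
      by (rule alg_identity[OF _ EF LapB bf(6)]) (use h in simp)
    have MN: "Lap f \<gamma> / h + Mcal f \<gamma> + h * Ncal f (fd 1 0) \<gamma>
        = J 0 \<gamma>/h + (1/2 * \<gamma>^2 * (- J 1 \<gamma>) - 1/2) + h * (1/3 * \<gamma>^3 * (- J 1 \<gamma>) + 1/8 * \<gamma>^4 * J 2 \<gamma> + 1/12 * (\<gamma> - fd 1 0))"
      unfolding Mcal_def Ncal_def deriv_Lap[OF \<gamma>G] deriv2_Lap[OF \<gamma>G] J0_Lap[OF \<gamma>G] by simp
    have J1: "0 \<le> J 1 \<gamma>" "J 1 \<gamma> \<le> J 1 a" using J_nonneg[OF \<gamma>G] J_mono[OF a ag] by auto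
    have J2: "0 \<le> J 2 \<gamma>" "J 2 \<gamma> \<le> J 2 a" using J_nonneg[OF \<gamma>G] J_mono[OF a ag] by auto
    have J3: "0 \<le> J 3 \<gamma>" "J 3 \<gamma> \<le> J 3 a" using J_nonneg[OF \<gamma>G] J_mono[OF a ag] by auto
    have G0: "0 \<le> \<Gamma>" using G1 by simp
    have h2: "0 \<le> h^2" by simp
    have t1: "\<bar>- J 1 \<gamma> * (D - \<gamma>^2/2 - \<gamma>^3*h/3)\<bar> \<le> 2*\<Gamma>^4 * J 1 a * h^2"
    proof -
      have "\<bar>- J 1 \<gamma> * (D - \<gamma>^2/2 - \<gamma>^3*h/3)\<bar> = J 1 \<gamma> * \<bar>D - \<gamma>^2/2 - \<gamma>^3*h/3\<bar>" using J1 by (simp add: abs_mult)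
      also have "\<dots> \<le> J 1 a * (2 * \<Gamma>^4 * h^2)" by (rule mult_mono[OF J1(2) bf(3)]) (use J1 in auto)
      finally show ?thesis by (simp add: algebra_simps)
    qed
    have t2: "\<bar>h/2 * J 2 \<gamma> * (D^2 - \<gamma>^4/4)\<bar> \<le> 3*\<Gamma>^5 * J 2 a * h^2"
    proof -
      have fac: "D^2 - \<gamma>^4/4 = (D - \<gamma>^2/2) * (D + \<gamma>^2/2)" by (simp add: algebra_simps power2_eq_square eval_nat_numeral)
      have g2: "\<gamma>^2 \<le> \<Gamma>^2"
      proof -
        have "\<bar>\<gamma>\<bar>^2 \<le> \<Gamma>^2" using g by (intro power_mono) auto
        thus ?thesis by simp
      qed
      have s0: "0 \<le> D + \<gamma>^2/2" using bf(2) by simp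
      have s1: "D + \<gamma>^2/2 \<le> 3 * \<Gamma>^2" using bf(5) g2 zero_le_power2[of \<Gamma>] by linarith
      have n3: "0 \<le> 2 * \<Gamma>^3 * h" using G0 h by simp
      have "\<bar>D^2 - \<gamma>^4/4\<bar> = \<bar>D - \<gamma>^2/2\<bar> * (D + \<gamma>^2/2)" unfolding fac using s0 by (simp add: abs_mult)
      also have "\<dots> \<le> (2 * \<Gamma>^3 * h) * (3 * \<Gamma>^2)" by (rule mult_mono[OF bf(4) s1]) (use s0 n3 in auto)
      also have "\<dots> = 6 * \<Gamma>^5 * h" by (simp add: eval_nat_numeral algebra_simps)
      finally have X: "\<bar>D^2 - \<gamma>^4/4\<bar> \<le> 6 * \<Gamma>^5 * h" .
      have "\<bar>h/2 * J 2 \<gamma> * (D^2 - \<gamma>^4/4)\<bar> = (h/2 * J 2 \<gamma>) * \<bar>D^2 - \<gamma>^4/4\<bar>" using h J2 by (simp add: abs_mult)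
      also have "\<dots> \<le> (h/2 * J 2 a) * (6 * \<Gamma>^5 * h)"
      proof (rule mult_mono[OF _ X])
        show "h/2 * J 2 \<gamma> \<le> h/2 * J 2 a" by (rule mult_left_mono[OF J2(2)]) (use h in simp)
      qed (use h J2 in auto)
      also have "\<dots> = 3*\<Gamma>^5 * J 2 a * h^2" by (simp add: power2_eq_square algebra_simps)
      finally show ?thesis .
    qed
    have t3: "\<bar>R/h\<bar> \<le> 2*\<Gamma>^6 * J 3 a * h^2"
    proof -
      have D3: "D^3 \<le> (2*\<Gamma>^2)^3" using bf(2) bf(5) by (intro power_mono) auto
      have "\<bar>R/h\<bar> = \<bar>R\<bar> / h" using h by (simp add: abs_div)
      also have "\<dots> \<le> ((h*D)^3/6 * J 3 \<gamma>) / h" by (rule divide_right_mono[OF Rb]) (use h in simp)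
      also have "\<dots> = h^2 * (D^3 * J 3 \<gamma>) / 6" using h by (simp add: field_simps eval_nat_numeral)
      also have "\<dots> \<le> h^2 * ((2*\<Gamma>^2)^3 * J 3 a) / 6"
      proof -
        have "D^3 * J 3 \<gamma> \<le> (2*\<Gamma>^2)^3 * J 3 a" by (rule mult_mono[OF D3 J3(2)]) (use J3 in auto)
        from mult_left_mono[OF this h2] show ?thesis by (rule divide_right_mono) simp
      qed
      also have "\<dots> = h^2 * (8 * \<Gamma>^6 * J 3 a) / 6" by (simp add: power_mult_distrib power_mult[symmetric])
      also have "\<dots> \<le> 2*\<Gamma>^6 * J 3 a * h^2" using J3 G0 by (simp add: field_simps)
      finally show ?thesis .
    qed
    have t4: "\<bar>h^2*D/12\<bar> \<le> \<Gamma>^2 * h^2"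
    proof -
      have "\<bar>h^2*D/12\<bar> = h^2 * D / 12" using bf(2) by simp
      also have "\<dots> \<le> h^2 * (2*\<Gamma>^2) / 12" using mult_left_mono[OF bf(5) h2] by (rule divide_right_mono) simp
      also have "\<dots> \<le> \<Gamma>^2 * h^2" by simp
      finally show ?thesis .
    qed
    have t5: "\<bar>E/h\<bar> \<le> PI * h^2"
    proof -
      have "\<bar>E/h\<bar> = \<bar>E\<bar> / h" using h by (simp add: abs_div)
      also have "\<dots> \<le> (h^4/384 * PI) / h" by (rule divide_right_mono[OF E(2)[folded PI_def]]) (use h in simp)
      also have "\<dots> = h^2 * (h / 384) * PI" using h by (simp add: field_simps eval_nat_numeral)
      also have "\<dots> \<le> h^2 * 1 * PI"
        by (rule mult_right_mono[OF mult_left_mono[OF _ h2] PI0]) (use hle in simp)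
      finally show ?thesis by (simp add: mult.commute)
    qed
    have "F - (Lap f \<gamma> / h + Mcal f \<gamma>) - h * Ncal f (fd 1 0) \<gamma>
        = F - (Lap f \<gamma> / h + Mcal f \<gamma> + h * Ncal f (fd 1 0) \<gamma>)" by (simp only: diff_diff_eq)
    also have "\<dots> = F - (J 0 \<gamma>/h + (1/2 * \<gamma>^2 * (- J 1 \<gamma>) - 1/2)) - h * (1/3 * \<gamma>^3 * (- J 1 \<gamma>) + 1/8 * \<gamma>^4 * J 2 \<gamma> + 1/12 * (\<gamma> - fd 1 0))"
      unfolding MN by (simp only: diff_diff_eq)
    also note T
    finally have TT: "F - (Lap f \<gamma> / h + Mcal f \<gamma>) - h * Ncal f (fd 1 0) \<gamma>
        = - J 1 \<gamma> * (D - \<gamma>^2/2 - \<gamma>^3*h/3) + h/2 * J 2 \<gamma> * (D^2 - \<gamma>^4/4) + R/h + h^2*D/12 - E/h" .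
    have Ce: "C * h^2 = 2*\<Gamma>^4 * J 1 a * h^2 + 3*\<Gamma>^5 * J 2 a * h^2 + 2*\<Gamma>^6 * J 3 a * h^2 + \<Gamma>^2 * h^2 + PI * h^2"
      unfolding C_def by (simp add: algebra_simps)
    have tri: "\<And>a b c d e::real. \<bar>a + b + c + d - e\<bar> \<le> \<bar>a\<bar> + \<bar>b\<bar> + \<bar>c\<bar> + \<bar>d\<bar> + \<bar>e\<bar>" by linarith
    have "\<bar>F - (Lap f \<gamma> / h + Mcal f \<gamma>) - h * Ncal f (fd 1 0) \<gamma>\<bar>
        = \<bar>- J 1 \<gamma> * (D - \<gamma>^2/2 - \<gamma>^3*h/3) + h/2 * J 2 \<gamma> * (D^2 - \<gamma>^4/4) + R/h + h^2*D/12 - E/h\<bar>"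
      by (simp only: TT)
    also have "\<dots> \<le> C * h^2" unfolding Ce using tri t1 t2 t3 t4 t5 by linarith
    finally show "\<bar>(\<Sum>n. f (real (n+1) * h) * (1 - \<gamma> * h) ^ (n+1)) - (Lap f \<gamma> / h + Mcal f \<gamma>) - h * Ncal f (fd 1 0) \<gamma>\<bar> \<le> C * h^2"
      unfolding F_def .
  qed
qed

end

context S4 begin

lemma pow_abs_le: "\<bar>\<gamma>::real\<bar> \<le> \<Gamma> \<Longrightarrow> \<bar>\<gamma>^n\<bar> \<le> \<Gamma>^n"
  by (simp add: power_abs power_mono)

lemma Ncal_bound:
  assumes a: "a \<in> G" and ag: "a \<le> \<gamma>" and g: "\<bar>\<gamma>\<bar> \<le> \<Gamma>"
  shows "\<bar>Ncal f fp \<gamma>\<bar> \<le> \<Gamma>^3 * J 1 a / 3 + \<Gamma>^4 * J 2 a / 8 + (\<Gamma> + \<bar>fp\<bar>)/12"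
proof -
  have \<gamma>G: "\<gamma> \<in> G" using G_up[OF a ag] .
  have J1: "0 \<le> J 1 \<gamma>" "J 1 \<gamma> \<le> J 1 a" using J_nonneg[OF \<gamma>G] J_mono[OF a ag] by auto
  have J2: "0 \<le> J 2 \<gamma>" "J 2 \<gamma> \<le> J 2 a" using J_nonneg[OF \<gamma>G] J_mono[OF a ag] by auto
  have e: "Ncal f fp \<gamma> = 1/3 * \<gamma>^3 * (- J 1 \<gamma>) + 1/8 * \<gamma>^4 * J 2 \<gamma> + 1/12 * (\<gamma> - fp)"
    unfolding Ncal_def deriv_Lap[OF \<gamma>G] deriv2_Lap[OF \<gamma>G] by simp
  have G0: "0 \<le> \<Gamma>" using g by linarith
  have b1: "\<bar>\<gamma>^3 * J 1 \<gamma>\<bar> \<le> \<Gamma>^3 * J 1 a"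
    unfolding abs_mult using J1 G0 by (intro mult_mono pow_abs_le[OF g]) auto
  have b2: "\<bar>\<gamma>^4 * J 2 \<gamma>\<bar> \<le> \<Gamma>^4 * J 2 a"
    unfolding abs_mult using J2 G0 by (intro mult_mono pow_abs_le[OF g]) auto
  have b3: "\<bar>\<gamma> - fp\<bar> \<le> \<Gamma> + \<bar>fp\<bar>" using g by linarith
  define X1 where "X1 = \<gamma>^3 * J 1 \<gamma>"
  define X2 where "X2 = \<gamma>^4 * J 2 \<gamma>"
  have e': "Ncal f fp \<gamma> = - X1/3 + X2/8 + (\<gamma> - fp)/12" unfolding e X1_def X2_def by simp
  have tri3: "\<And>x y z::real. \<bar>x + y + z\<bar> \<le> \<bar>x\<bar> + \<bar>y\<bar> + \<bar>z\<bar>" by linarith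
  have "\<bar>Ncal f fp \<gamma>\<bar> \<le> \<bar>- X1/3\<bar> + \<bar>X2/8\<bar> + \<bar>(\<gamma> - fp)/12\<bar>"
    unfolding e' by (rule tri3)
  also have "\<bar>- X1/3\<bar> + \<bar>X2/8\<bar> + \<bar>(\<gamma> - fp)/12\<bar> = \<bar>X1\<bar>/3 + \<bar>X2\<bar>/8 + \<bar>\<gamma> - fp\<bar>/12" by simp
  also have "\<dots> \<le> \<Gamma>^3 * J 1 a / 3 + \<Gamma>^4 * J 2 a / 8 + (\<Gamma> + \<bar>fp\<bar>)/12"
    using b1 b2 b3 unfolding X1_def X2_def by (intro add_mono divide_right_mono) auto
  finally show ?thesis .
qed

lemma Mcal_bound:
  assumes a: "a \<in> G" and ag: "a \<le> \<gamma>" and g: "\<bar>\<gamma>\<bar> \<le> \<Gamma>"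
  shows "\<bar>Mcal f \<gamma>\<bar> \<le> \<Gamma>^2/2 * J 1 a + 1/2"
proof -
  have \<gamma>G: "\<gamma> \<in> G" using G_up[OF a ag] .
  have J1: "0 \<le> J 1 \<gamma>" "J 1 \<gamma> \<le> J 1 a" using J_nonneg[OF \<gamma>G] J_mono[OF a ag] by auto
  have e: "Mcal f \<gamma> = 1/2 * \<gamma>^2 * (- J 1 \<gamma>) - 1/2"
    unfolding Mcal_def deriv_Lap[OF \<gamma>G] by simp
  have G0: "0 \<le> \<Gamma>" using g by linarith
  have b1: "\<bar>\<gamma>^2 * J 1 \<gamma>\<bar> \<le> \<Gamma>^2 * J 1 a"
    unfolding abs_mult using J1 G0 by (intro mult_mono pow_abs_le[OF g]) auto
  define X1 where "X1 = \<gamma>^2 * J 1 \<gamma>"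
  have e': "Mcal f \<gamma> = - X1/2 - 1/2" unfolding e X1_def by simp
  have "\<bar>Mcal f \<gamma>\<bar> \<le> \<bar>X1\<bar>/2 + 1/2" unfolding e' by linarith
  thus ?thesis using b1 unfolding X1_def by simp
qed

lemma crude:
  assumes a: "a \<in> G" and ag: "a \<le> \<gamma>" and g: "\<bar>\<gamma>\<bar> \<le> \<Gamma>" and h: "0 < h" "h \<le> 1"
    and hh: "1 / h \<le> 2 * \<Gamma>" and r: "0 \<le> 1 - \<gamma> * h"
  shows "\<bar>(\<Sum>n. f (real (n+1) * h) * (1 - \<gamma> * h) ^ (n+1)) - (Lap f \<gamma> / h + Mcal f \<gamma>)\<bar>
     \<le> 2*\<Gamma> * exp \<Gamma> * J 0 a + 2*\<Gamma> * J 0 a + (\<Gamma>^2/2 * J 1 a + 1/2)"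
proof -
  have \<gamma>G: "\<gamma> \<in> G" using G_up[OF a ag] .
  have J0: "0 \<le> J 0 \<gamma>" "J 0 \<gamma> \<le> J 0 a" using J_nonneg[OF \<gamma>G] J_mono[OF a ag] by auto
  define F where "F = (\<Sum>n. f (real (n+1) * h) * (1 - \<gamma> * h) ^ (n+1))"
  have F0: "0 \<le> F" unfolding F_def by (rule cmp_bound(2)[OF \<gamma>G h(1) r])
  have F1: "F \<le> exp (\<bar>\<gamma>\<bar> * h) / h * J 0 \<gamma>" unfolding F_def by (rule cmp_bound(3)[OF \<gamma>G h(1) r])
  have "\<bar>\<gamma>\<bar> * h \<le> \<Gamma> * 1" using g h by (intro mult_mono) auto
  hence ex: "exp (\<bar>\<gamma>\<bar> * h) \<le> exp \<Gamma>" by simp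
  have ih: "0 \<le> 1/h" using h by simp
  have G0: "0 \<le> \<Gamma>" using g by linarith
  have "exp (\<bar>\<gamma>\<bar> * h) / h * J 0 \<gamma> = exp (\<bar>\<gamma>\<bar> * h) * (1/h) * J 0 \<gamma>" by simp
  also have "\<dots> \<le> exp \<Gamma> * (2*\<Gamma>) * J 0 a"
    by (intro mult_mono ex hh J0) (use ih J0 G0 in auto)
  finally have F2: "F \<le> 2*\<Gamma> * exp \<Gamma> * J 0 a" using F1 by (simp add: algebra_simps)
  have L: "Lap f \<gamma> / h = (1/h) * J 0 \<gamma>" using J0_Lap[OF \<gamma>G] by simp
  have L0: "0 \<le> Lap f \<gamma> / h" unfolding L using ih J0 by simp
  have L1: "Lap f \<gamma> / h \<le> 2*\<Gamma> * J 0 a" unfolding L by (rule mult_mono[OF hh J0(2)]) (use J0 G0 in \<open>auto intro: order_trans[OF ih hh]\<close>)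
  have M: "\<bar>Mcal f \<gamma>\<bar> \<le> \<Gamma>^2/2 * J 1 a + 1/2" by (rule Mcal_bound[OF a ag g])
  show ?thesis unfolding F_def[symmetric] using F0 F2 L0 L1 M by linarith
qed

end

lemma sqrt_conv:
  fixes s :: real assumes "1 \<le> s"
  shows "0 < sqrt s" "real (n+1) / sqrt s = real (n+1) * (1 / sqrt s)" "\<gamma> / sqrt s = \<gamma> * (1 / sqrt s)"
    "sqrt s * L = L / (1 / sqrt s)" "C / sqrt s = C * (1 / sqrt s)"
  using assms by auto


theorem theorem4p2:
  fixes f :: "real \<Rightarrow> real" and fd :: "nat \<Rightarrow> real \<Rightarrow> real"
  assumes nonneg: "\<And>x. x \<ge> 0 \<Longrightarrow> f x \<ge> 0"
    and noninc: "\<And>x y. 0 \<le> x \<Longrightarrow> x \<le> y \<Longrightarrow> f y \<le> f x"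
    and f0: "f 0 = 1"
    and fd0: "fd 0 = f"
    and fd_deriv: "\<And>j x. j < 4 \<Longrightarrow> x \<ge> 0 \<Longrightarrow>
                     (fd j has_real_derivative fd (Suc j) x) (at x within {0..})"
    and fd4_cont: "continuous_on {0..} (fd 4)"
    and integrable: "\<And>\<gamma> j. ereal \<gamma> > gamma_min f \<Longrightarrow> j \<le> 4 \<Longrightarrow>
                     set_integrable lborel {0..} (\<lambda>x. exp (- \<gamma> * x) * fd j x)"
    and vanish: "\<And>\<gamma> j. ereal \<gamma> > gamma_min f \<Longrightarrow> j \<le> 4 \<Longrightarrow>
                     ((\<lambda>x. exp (- \<gamma> * x) * fd j x) \<longlongrightarrow> 0) at_top"
  shows "(\<forall>K. compact K \<and> K \<subseteq> {\<gamma>. ereal \<gamma> > gamma_min f} \<longrightarrow>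
            (\<exists>C. \<forall>s \<gamma>. s \<ge> 1 \<and> \<gamma> \<in> K \<and> \<gamma> \<le> sqrt s \<longrightarrow>
               summable (\<lambda>n. f (real (n + 1) / sqrt s) * (1 - \<gamma> / sqrt s) ^ (n + 1)) \<and>
               \<bar>Fs f s (1 - \<gamma> / sqrt s) - (sqrt s * Lap f \<gamma> + Mcal f \<gamma>)\<bar> \<le> C / sqrt s))
         \<and> (\<forall>\<gamma>. ereal \<gamma> > gamma_min f \<longrightarrow>
            ((\<lambda>s. sqrt s * (Fs f s (1 - \<gamma> / sqrt s) - (sqrt s * Lap f \<gamma> + Mcal f \<gamma>)))
               \<longlongrightarrow> Ncal f (fd 1 0) \<gamma>) at_top)"
proof -
  interpret S: S4 f fd
    by (rule S4.intro) (fact nonneg, fact noninc, fact f0, fact fd0, fact fd_deriv, fact fd4_cont,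
        fact integrable, fact vanish)
  have Fs_eq: "Fs f s (1 - \<gamma> / sqrt s) = (\<Sum>n. f (real (n+1) * (1/sqrt s)) * (1 - \<gamma> * (1/sqrt s)) ^ (n+1))"
    for s \<gamma> by (simp add: Fs_def)
  have sm_eq: "(\<lambda>n. f (real (n + 1) / sqrt s) * (1 - \<gamma> / sqrt s) ^ (n + 1))
      = (\<lambda>n. f (real (n+1) * (1/sqrt s)) * (1 - \<gamma> * (1/sqrt s)) ^ (n+1))" for s \<gamma> by simp
  show ?thesis
  proof (intro conjI allI impI)
    fix K :: "real set" assume K: "compact K \<and> K \<subseteq> {\<gamma>. ereal \<gamma> > gamma_min f}"
    show "\<exists>C. \<forall>s \<gamma>. s \<ge> 1 \<and> \<gamma> \<in> K \<and> \<gamma> \<le> sqrt s \<longrightarrow>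
               summable (\<lambda>n. f (real (n + 1) / sqrt s) * (1 - \<gamma> / sqrt s) ^ (n + 1)) \<and>
               \<bar>Fs f s (1 - \<gamma> / sqrt s) - (sqrt s * Lap f \<gamma> + Mcal f \<gamma>)\<bar> \<le> C / sqrt s"
    proof (cases "K = {}")
      case True thus ?thesis by (intro exI[of _ 0]) auto
    next
      case False
      obtain a where a: "a \<in> K" "\<forall>t\<in>K. a \<le> t" using compact_attains_inf[of K] K False by blast
      obtain b where b: "b \<in> K" "\<forall>t\<in>K. t \<le> b" using compact_attains_sup[of K] K False by blast
      define \<Gamma> where "\<Gamma> = max 1 (max \<bar>a\<bar> b)"
      have KG: "K \<subseteq> S.G" using K by (auto simp: S.G_def)
      have aG: "a \<in> S.G" using a KG by blast
      have G1: "1 \<le> \<Gamma>" "\<bar>a\<bar> \<le> \<Gamma>" "b \<le> \<Gamma>" by (auto simp: \<Gamma>_def)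
      obtain C0 where C0: "\<forall>h \<gamma>. 0 < h \<and> \<Gamma> * h \<le> 1/2 \<and> a \<le> \<gamma> \<and> \<gamma> \<le> \<Gamma> \<longrightarrow>
          summable (\<lambda>n. f (real (n+1) * h) * (1 - \<gamma> * h) ^ (n+1)) \<and>
          \<bar>(\<Sum>n. f (real (n+1) * h) * (1 - \<gamma> * h) ^ (n+1)) - (Lap f \<gamma> / h + Mcal f \<gamma>) - h * Ncal f (fd 1 0) \<gamma>\<bar> \<le> C0 * h^2"
        using S.master[OF aG G1(1) G1(2)] by blast
      define NB where "NB = \<Gamma>^3 * S.J 1 a / 3 + \<Gamma>^4 * S.J 2 a / 8 + (\<Gamma> + \<bar>fd 1 0\<bar>)/12"
      define B2 where "B2 = 2*\<Gamma> * exp \<Gamma> * S.J 0 a + 2*\<Gamma> * S.J 0 a + (\<Gamma>^2/2 * S.J 1 a + 1/2)"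
      have J0: "0 \<le> S.J k a" for k using S.J_nonneg[OF aG] .
      have NB0: "0 \<le> NB" unfolding NB_def using J0 G1 by simp
      have B20: "0 \<le> B2" unfolding B2_def using J0 G1 by simp
      define C where "C = \<bar>C0\<bar> + NB + 2*\<Gamma>*B2"
      show ?thesis
      proof (intro exI[of _ C] allI impI conjI)
        fix s \<gamma> assume as: "s \<ge> 1 \<and> \<gamma> \<in> K \<and> \<gamma> \<le> sqrt s"
        hence s1: "1 \<le> s" and gK: "\<gamma> \<in> K" and gs: "\<gamma> \<le> sqrt s" by auto
        define h where "h = 1 / sqrt s"
        have sq: "1 \<le> sqrt s" using s1 by simp
        have h0: "0 < h" and h1: "h \<le> 1" using sq by (auto simp: h_def)
        have sh: "sqrt s * h = 1" using sq by (simp add: h_def)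
        have ag: "a \<le> \<gamma>" using a gK by auto
        have gb: "\<gamma> \<le> \<Gamma>" using b gK G1 by force
        have g: "\<bar>\<gamma>\<bar> \<le> \<Gamma>" using ag gb G1 by linarith
        have \<gamma>G: "\<gamma> \<in> S.G" using gK KG by blast
        have r: "0 \<le> 1 - \<gamma> * h"
        proof -
          have "\<gamma> * h \<le> sqrt s * h" using gs h0 by (intro mult_right_mono) auto
          thus ?thesis using sh by linarith
        qed
        show "summable (\<lambda>n. f (real (n + 1) / sqrt s) * (1 - \<gamma> / sqrt s) ^ (n + 1))"
          unfolding sm_eq h_def[symmetric] by (rule S.cmp_bound(1)[OF \<gamma>G h0 r])
        define F where "F = (\<Sum>n. f (real (n+1) * h) * (1 - \<gamma> * h) ^ (n+1))"
        have FF: "Fs f s (1 - \<gamma> / sqrt s) = F" unfolding Fs_eq F_def h_def ..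
        have LL: "sqrt s * Lap f \<gamma> = Lap f \<gamma> / h" using sq by (simp add: h_def)
        have CC: "C / sqrt s = C * h" by (simp add: h_def)
        have "\<bar>F - (Lap f \<gamma> / h + Mcal f \<gamma>)\<bar> \<le> C * h"
        proof (cases "\<Gamma> * h \<le> 1/2")
          case True
          have m: "\<bar>F - (Lap f \<gamma> / h + Mcal f \<gamma>) - h * Ncal f (fd 1 0) \<gamma>\<bar> \<le> C0 * h^2"
            using C0 h0 True ag gb unfolding F_def by blast
          have N: "\<bar>Ncal f (fd 1 0) \<gamma>\<bar> \<le> NB" unfolding NB_def by (rule S.Ncal_bound[OF aG ag g])
          have hN: "\<bar>h * Ncal f (fd 1 0) \<gamma>\<bar> \<le> NB * h"
            using mult_left_mono[OF N, of h] h0 by (simp add: abs_mult mult.commute)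
          have "C0 * h^2 \<le> \<bar>C0\<bar> * h^2" using h0 by (intro mult_right_mono) auto
          also have "\<dots> \<le> \<bar>C0\<bar> * h" using h0 h1 by (intro mult_left_mono) (auto simp: power2_eq_square)
          finally have c0: "C0 * h^2 \<le> \<bar>C0\<bar> * h" .
          have "0 \<le> 2*\<Gamma>*B2*h" using G1 B20 h0 by simp
          hence "\<bar>F - (Lap f \<gamma> / h + Mcal f \<gamma>)\<bar> \<le> \<bar>C0\<bar> * h + NB * h + 2*\<Gamma>*B2*h"
            using m hN c0 by linarith
          thus ?thesis unfolding C_def by (simp add: algebra_simps)
        next
          case False
          have hh: "1 / h \<le> 2 * \<Gamma>"
          proof -
            have "1 < 2 * \<Gamma> * h" using False by simp
            thus ?thesis using h0 by (simp add: divide_simps)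
          qed
          have cb: "\<bar>F - (Lap f \<gamma> / h + Mcal f \<gamma>)\<bar> \<le> B2" unfolding F_def B2_def
            by (rule S.crude[OF aG ag g h0 h1 hh r])
          have "B2 * 1 \<le> B2 * (2 * \<Gamma> * h)" using False B20 by (intro mult_left_mono) auto
          also have "\<dots> \<le> C * h" unfolding C_def using NB0 h0
            by (simp add: algebra_simps)
          finally show ?thesis using cb by linarith
        qed
        thus "\<bar>Fs f s (1 - \<gamma> / sqrt s) - (sqrt s * Lap f \<gamma> + Mcal f \<gamma>)\<bar> \<le> C / sqrt s"
          unfolding FF LL CC .
      qed
    qed
  next
    fix \<gamma> assume g: "ereal \<gamma> > gamma_min f"
    have \<gamma>G: "\<gamma> \<in> S.G" using g by (simp add: S.G_def)
    define \<Gamma> where "\<Gamma> = max 1 \<bar>\<gamma>\<bar>"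
    have G1: "1 \<le> \<Gamma>" "\<bar>\<gamma>\<bar> \<le> \<Gamma>" by (auto simp: \<Gamma>_def)
    obtain C0 where C0: "\<forall>h \<gamma>'. 0 < h \<and> \<Gamma> * h \<le> 1/2 \<and> \<gamma> \<le> \<gamma>' \<and> \<gamma>' \<le> \<Gamma> \<longrightarrow>
          summable (\<lambda>n. f (real (n+1) * h) * (1 - \<gamma>' * h) ^ (n+1)) \<and>
          \<bar>(\<Sum>n. f (real (n+1) * h) * (1 - \<gamma>' * h) ^ (n+1)) - (Lap f \<gamma>' / h + Mcal f \<gamma>') - h * Ncal f (fd 1 0) \<gamma>'\<bar> \<le> C0 * h^2"
      using S.master[OF \<gamma>G G1(1) G1(2)] by blast
    have ev: "\<forall>\<^sub>F s in at_top. norm (sqrt s * (Fs f s (1 - \<gamma> / sqrt s) - (sqrt s * Lap f \<gamma> + Mcal f \<gamma>)) - Ncal f (fd 1 0) \<gamma>)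
              \<le> \<bar>C0\<bar> / sqrt s"
    proof (rule eventually_at_top_linorderI[of "4 * \<Gamma>^2"])
      fix s assume s: "4 * \<Gamma>^2 \<le> s"
      have G0: "0 < \<Gamma>" using G1 by simp
      have "sqrt (4 * \<Gamma>^2) \<le> sqrt s" using s by simp
      hence sq: "2 * \<Gamma> \<le> sqrt s" using G0 by (simp add: real_sqrt_mult)
      define h where "h = 1 / sqrt s"
      have sp: "0 < sqrt s" using sq G0 by linarith
      have h0: "0 < h" using sp by (simp add: h_def)
      have sh: "sqrt s * h = 1" using sp by (simp add: h_def)
      have p: "\<Gamma> * h \<le> 1/2"
      proof -
        have "\<Gamma> * h * 2 = 2 * \<Gamma> / sqrt s" by (simp add: h_def)
        also have "\<dots> \<le> 1" using sq sp by simp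
        finally show ?thesis by simp
      qed
      define F where "F = (\<Sum>n. f (real (n+1) * h) * (1 - \<gamma> * h) ^ (n+1))"
      have FF: "Fs f s (1 - \<gamma> / sqrt s) = F" unfolding Fs_eq F_def h_def ..
      have LL: "sqrt s * Lap f \<gamma> = Lap f \<gamma> / h" using sp by (simp add: h_def)
      have m: "\<bar>F - (Lap f \<gamma> / h + Mcal f \<gamma>) - h * Ncal f (fd 1 0) \<gamma>\<bar> \<le> C0 * h^2"
        using C0 h0 p G1 unfolding F_def by auto
      have "sqrt s * (F - (Lap f \<gamma> / h + Mcal f \<gamma>)) - Ncal f (fd 1 0) \<gamma>
          = sqrt s * (F - (Lap f \<gamma> / h + Mcal f \<gamma>) - h * Ncal f (fd 1 0) \<gamma>)"
        using sh by (simp add: algebra_simps)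
      hence "norm (sqrt s * (F - (Lap f \<gamma> / h + Mcal f \<gamma>)) - Ncal f (fd 1 0) \<gamma>)
          = sqrt s * \<bar>F - (Lap f \<gamma> / h + Mcal f \<gamma>) - h * Ncal f (fd 1 0) \<gamma>\<bar>"
        using sp by (simp add: abs_mult)
      also have "\<dots> \<le> sqrt s * (C0 * h^2)" using m sp by (intro mult_left_mono) auto
      also have "\<dots> = C0 * h" using sh by (simp add: power2_eq_square algebra_simps)
      also have "\<dots> \<le> \<bar>C0\<bar> * h" using h0 by (intro mult_right_mono) auto
      also have "\<dots> = \<bar>C0\<bar> / sqrt s" by (simp add: h_def)
      finally show "norm (sqrt s * (Fs f s (1 - \<gamma> / sqrt s) - (sqrt s * Lap f \<gamma> + Mcal f \<gamma>)) - Ncal f (fd 1 0) \<gamma>)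
              \<le> \<bar>C0\<bar> / sqrt s" unfolding FF LL .
    qed
    have lim0: "((\<lambda>s. \<bar>C0\<bar> / sqrt s) \<longlongrightarrow> 0) at_top"
      by (rule tendsto_divide_0[OF tendsto_const filterlim_at_top_imp_at_infinity[OF sqrt_at_top]])
    show "((\<lambda>s. sqrt s * (Fs f s (1 - \<gamma> / sqrt s) - (sqrt s * Lap f \<gamma> + Mcal f \<gamma>)))
               \<longlongrightarrow> Ncal f (fd 1 0) \<gamma>) at_top"
      using Lim_null_comparison[OF ev lim0] by (subst Lim_null) simp
  qed
qed


end
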